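(* Let $f:\mathbb{R}^n\to\mathbb{R}$ be of class $C^{2+}$ with $L_f$-Lipschitz continuous gradient, let $g:\mathbb{R}^n\to\mathbb{R}\cup\{+\infty\}$ be proper, lower semicontinuous and $\rho$-weakly convex, let $\varphi=f+g$ with $\operatorname{argmin}\varphi\neq\emptyset$, and suppose $\{x:\varphi(x)\le\varphi(x^0)\}$ is bounded. Let $(x^k)_{k\in\mathbb N}$ be generated by the NTRA algorithm described in the context, and suppose that there is $\beta\in(0,1)$ such that for all $k$, $$m_k(0)-m_k(d^k)\ge\beta\|\nabla\varphi_\gamma(x^k)\|\min\Big\{\delta_k,\frac{\|\nabla\varphi_\gamma(x^k)\|}{\|B_k\|}\Big\}.$$ Then $\lim_{k\to\infty}\|\nabla\varphi_\gamma(x^k)\|=0$.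
   Context: $C^{2+}$: twice continuously differentiable with locally Lipschitz Hessian; $g$ is $\rho$-weakly convex if $g+\frac\rho2\|\cdot\|^2$ is convex. $\operatorname{prox}_{\gamma g}(x)=\operatorname{argmin}_z\{g(z)+\frac1{2\gamma}\|z-x\|^2\}$, $R_\gamma(x)=\gamma^{-1}(x-\operatorname{prox}_{\gamma g}(x-\gamma\nabla f(x)))$, forward-backward envelope $\varphi_\gamma(x)=\inf_u\{f(x)+\langle\nabla f(x),u-x\rangle+g(u)+\frac1{2\gamma}\|u-x\|^2\}$ (continuously differentiable here). $\partial_C$ denotes the Clarke generalized Jacobian. NTRA: given $x^0$, $\gamma\in(0,\min\{1/L_f,1/\rho\})$, $\delta_0>0$, $0<\mu_1<\mu_2<1$, $0<c_1<c_2<1<c_3$; for $k=0,1,\dots$: select $P_k\in\partial_C\operatorname{prox}_{\gamma g}(x^k-\gamma\nabla f(x^k))$; set $Q_k=I-\gamma\nabla^2f(x^k)$, $B_k=\gamma^{-1}Q_k(I-P_kQ_k)$; stop if $R_\gamma(x^k)=0$ and $\lambda_{\min}(B_k)\ge0$; let $d^k$ be an (approximate) solution of $\min_d m_k(d):=\varphi_\gamma(x^k)+\langle\nabla\varphi_\gamma(x^k),d\rangle+\frac12\langle B_kd,d\rangle$ s.t. $\|d\|\le\delta_k$; compute $\rho_k=\frac{\varphi_\gamma(x^k)-\varphi_\gamma(x^k+d^k)}{m_k(0)-m_k(d^k)}$; set $x^{k+1}=x^k$ if $\rho_k<\mu_1$, else $x^{k+1}=x^k+d^k$; update $\delta_{k+1}=c_1\delta_k$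 if $\rho_k<\mu_1$, $c_2\delta_k$ if $\mu_1\le\rho_k<\mu_2$, $c_3\delta_k$ if $\rho_k\ge\mu_2$. *)

theory Defs
  imports "HOL-Analysis.Analysis"
begin

type_synonym 'n mat = "real ^ 'n ^ 'n"

definition C2plus :: "(real ^ 'n \<Rightarrow> real) \<Rightarrow> (real ^ 'n \<Rightarrow> real ^ 'n)
    \<Rightarrow> (real ^ 'n \<Rightarrow> 'n::finite mat) \<Rightarrow> bool" where
  "C2plus f gf Hf \<longleftrightarrow>
     (\<forall>x. (f has_derivative (\<lambda>h. gf x \<bullet> h)) (at x)) \<and>
     (\<forall>x. (gf has_derivative (\<lambda>h. Hf x *v h)) (at x)) \<and>
     continuous_on UNIV Hf \<and>
     (\<forall>x. \<exists>e>0. \<exists>L. L-lipschitz_on (ball x e) Hf)"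

definition proper_fun :: "('a \<Rightarrow> ereal) \<Rightarrow> bool" where
  "proper_fun g \<longleftrightarrow> (\<forall>x. g x \<noteq> -\<infinity>) \<and> (\<exists>x. g x < \<infinity>)"

definition lsc_fun :: "('a::topological_space \<Rightarrow> ereal) \<Rightarrow> bool" where
  "lsc_fun g \<longleftrightarrow> (\<forall>x. g x \<le> Liminf (at x) g)"

text \<open>Convexity of an extended-real-valued function (with 0 * \<infinity> = 0).\<close>
definition ereal_convex :: "('a::real_vector \<Rightarrow> ereal) \<Rightarrow> bool" where
  "ereal_convex h \<longleftrightarrow> (\<forall>x y t. 0 \<le> t \<and> t \<le> 1 \<longrightarrow>
      h ((1 - t) *\<^sub>R x + t *\<^sub>R y) \<le> ereal (1 - t) * h x + ereal t * h y)"

definition weakly_convex :: "real \<Rightarrow> ('a::real_normed_vector \<Rightarrow> ereal) \<Rightarrow> bool" where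
  "weakly_convex \<rho> g \<longleftrightarrow> ereal_convex (\<lambda>x. g x + ereal (\<rho> / 2 * (norm x)\<^sup>2))"

definition prox :: "real \<Rightarrow> ('a::real_normed_vector \<Rightarrow> ereal) \<Rightarrow> 'a \<Rightarrow> 'a" where
  "prox \<gamma> g x = (THE z. \<forall>w. g z + ereal ((norm (z - x))\<^sup>2 / (2 * \<gamma>))
                          \<le> g w + ereal ((norm (w - x))\<^sup>2 / (2 * \<gamma>)))"

definition resid :: "real \<Rightarrow> (real ^ 'n \<Rightarrow> real ^ 'n) \<Rightarrow> (real ^ 'n \<Rightarrow> ereal)
    \<Rightarrow> real ^ 'n \<Rightarrow> real ^ 'n" where
  "resid \<gamma> gf g x = (1 / \<gamma>) *\<^sub>R (x - prox \<gamma> g (x - \<gamma> *\<^sub>R gf x))"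

text \<open>Forward-backward envelope (real-valued in the setting considered).\<close>
definition fbe :: "real \<Rightarrow> (real ^ 'n \<Rightarrow> real) \<Rightarrow> (real ^ 'n \<Rightarrow> real ^ 'n)
    \<Rightarrow> (real ^ 'n \<Rightarrow> ereal) \<Rightarrow> real ^ 'n \<Rightarrow> real" where
  "fbe \<gamma> f gf g x = real_of_ereal
     (INF u. ereal (f x + gf x \<bullet> (u - x) + (norm (u - x))\<^sup>2 / (2 * \<gamma>)) + g u)"

definition grad :: "(real ^ 'n \<Rightarrow> real) \<Rightarrow> real ^ 'n \<Rightarrow> real ^ 'n" where
  "grad F x = (THE D. (F has_derivative (\<lambda>h. D \<bullet> h)) (at x))"

definition clarke_jac :: "(real ^ 'n \<Rightarrow> real ^ 'n) \<Rightarrow> real ^ 'n \<Rightarrow> 'n::finite mat set" where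
  "clarke_jac F x = convex hull {M. \<exists>y J. (y \<longlonglongrightarrow> x) \<and> (J \<longlonglongrightarrow> M) \<and>
      (\<forall>i. (F has_derivative (\<lambda>h. J i *v h)) (at (y i)))}"

definition real_eigenvalues :: "'n::finite mat \<Rightarrow> real set" where
  "real_eigenvalues B = {l. \<exists>v. v \<noteq> 0 \<and> B *v v = l *\<^sub>R v}"

definition lambda_min :: "'n::finite mat \<Rightarrow> real" where
  "lambda_min B = Inf (real_eigenvalues B)"

definition mat_norm :: "'n::finite mat \<Rightarrow> real" where
  "mat_norm B = onorm (\<lambda>v. B *v v)"

definition tr_model :: "real \<Rightarrow> real ^ 'n \<Rightarrow> 'n::finite mat \<Rightarrow> real ^ 'n \<Rightarrow> real" where
  "tr_model phix gphix B d = phix + gphix \<bullet> d + (1/2) * ((B *v d) \<bullet> d)"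

text \<open>min{delta, a/b} with the convention a/0 = +\<infinity>.\<close>
definition min_ratio :: "real \<Rightarrow> real \<Rightarrow> real \<Rightarrow> real" where
  "min_ratio \<delta> a b = (if b = 0 then \<delta> else min \<delta> (a / b))"

definition Qmat :: "real \<Rightarrow> (real ^ 'n \<Rightarrow> 'n::finite mat) \<Rightarrow> real ^ 'n \<Rightarrow> 'n mat" where
  "Qmat \<gamma> Hf x = mat 1 - \<gamma> *\<^sub>R Hf x"

definition Bmat :: "real \<Rightarrow> (real ^ 'n \<Rightarrow> 'n::finite mat) \<Rightarrow> 'n mat \<Rightarrow> real ^ 'n \<Rightarrow> 'n mat" where
  "Bmat \<gamma> Hf P x = (1 / \<gamma>) *\<^sub>R (Qmat \<gamma> Hf x ** (mat 1 - P ** Qmat \<gamma> Hf x))"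

end

theory Submission
  imports Defs
begin

locale fbe_setting =
  fixes f :: "real ^ 'n::finite \<Rightarrow> real" and gf :: "real ^ 'n \<Rightarrow> real ^ 'n"
    and Hf :: "real ^ 'n \<Rightarrow> 'n mat" and g :: "real ^ 'n \<Rightarrow> ereal"
    and Lf \<rho> \<gamma> :: real
  assumes f_C2: "C2plus f gf Hf"
    and f_lip: "Lf-lipschitz_on UNIV gf"
    and g_proper: "proper_fun g"
    and g_lsc: "lsc_fun g"
    and rho_nonneg: "0 \<le> \<rho>"
    and g_wc: "weakly_convex \<rho> g"
    and argmin_ne: "\<exists>z. \<forall>y. ereal (f z) + g z \<le> ereal (f y) + g y"
    and gam_pos: "0 < \<gamma>" and gamL: "\<gamma> * Lf < 1" and gamrho: "\<gamma> * \<rho> < 1"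
begin

lemma f_deriv: "(f has_derivative (\<lambda>h. gf x \<bullet> h)) (at x)"
  using f_C2 unfolding C2plus_def by blast

lemma gf_deriv: "(gf has_derivative (\<lambda>h. Hf x *v h)) (at x)"
  using f_C2 unfolding C2plus_def by blast

lemma Hf_cont: "continuous_on UNIV Hf"
  using f_C2 unfolding C2plus_def by blast

lemma Lf_nonneg: "0 \<le> Lf"
  using f_lip unfolding lipschitz_on_def by blast

lemma gf_lip: "norm (gf a - gf b) \<le> Lf * norm (a - b)"
  using f_lip unfolding lipschitz_on_def by (simp add: dist_norm)

lemma gf_cont: "continuous_on UNIV gf"
  using f_lip by (rule lipschitz_on_continuous_on)

lemma descent: "f u \<le> f x + gf x \<bullet> (u - x) + Lf / 2 * (norm (u - x))\<^sup>2"
proof -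
  define v where "v = u - x"
  define h where "h t = f (x + t *\<^sub>R v) - t * (gf x \<bullet> v) - Lf / 2 * t\<^sup>2 * (norm v)\<^sup>2" for t
  have D: "(h has_real_derivative (gf (x + t *\<^sub>R v) \<bullet> v - gf x \<bullet> v - Lf * t * (norm v)\<^sup>2)) (at t)" for t
  proof -
    have 1: "((\<lambda>t. x + t *\<^sub>R v) has_derivative (\<lambda>s. s *\<^sub>R v)) (at t)"
      by (auto intro!: derivative_eq_intros)
    have 2: "((\<lambda>t. f (x + t *\<^sub>R v)) has_derivative (\<lambda>s. gf (x + t *\<^sub>R v) \<bullet> (s *\<^sub>R v))) (at t)"
      using has_derivative_compose[OF 1 f_deriv] by simp
    have 3: "((\<lambda>t. f (x + t *\<^sub>R v)) has_real_derivative (gf (x + t *\<^sub>R v) \<bullet> v)) (at t)"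
    proof -
      have "(\<lambda>s. gf (x + t *\<^sub>R v) \<bullet> (s *\<^sub>R v)) = (*) (gf (x + t *\<^sub>R v) \<bullet> v)"
        by (auto simp: fun_eq_iff)
      then show ?thesis using 2 unfolding has_field_derivative_def by simp
    qed
    show ?thesis unfolding h_def
      apply (rule derivative_eq_intros 3 | simp)+
      done
  qed
  have "h 1 \<le> h 0"
  proof (rule DERIV_nonpos_imp_nonincreasing[of 0 1 h])
    fix t :: real assume t: "0 \<le> t" "t \<le> 1"
    have "gf (x + t *\<^sub>R v) \<bullet> v - gf x \<bullet> v = (gf (x + t *\<^sub>R v) - gf x) \<bullet> v"
      by (simp add: inner_diff_left)
    also have "\<dots> \<le> norm (gf (x + t *\<^sub>R v) - gf x) * norm v"
      by (rule norm_cauchy_schwarz)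
    also have "\<dots> \<le> Lf * norm (t *\<^sub>R v) * norm v"
      using gf_lip[of "x + t *\<^sub>R v" x] by (simp add: mult_right_mono)
    also have "\<dots> = Lf * t * (norm v)\<^sup>2" using t by (simp add: power2_eq_square)
    finally have "gf (x + t *\<^sub>R v) \<bullet> v - gf x \<bullet> v \<le> Lf * t * (norm v)\<^sup>2" .
    then show "\<exists>y. (h has_real_derivative y) (at t) \<and> y \<le> 0"
      using D[of t] by (intro exI[of _ "gf (x + t *\<^sub>R v) \<bullet> v - gf x \<bullet> v - Lf * t * (norm v)\<^sup>2"]) auto
  qed simp
  then show ?thesis unfolding h_def v_def by simp
qed

definition phistar :: real where
  "phistar = (SOME ps. \<forall>y. ereal ps \<le> ereal (f y) + g y)"

lemma g_not_minf: "g u \<noteq> -\<infinity>"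
  using g_proper unfolding proper_fun_def by blast

lemma g_fin_ex: "\<exists>x1. g x1 < \<infinity>"
  using g_proper unfolding proper_fun_def by blast

lemma phistar_ex: "\<exists>ps. \<forall>y. ereal ps \<le> ereal (f y) + g y"
proof -
  obtain z where z: "\<forall>y. ereal (f z) + g z \<le> ereal (f y) + g y" using argmin_ne by blast
  obtain x1 where x1: "g x1 < \<infinity>" using g_fin_ex by blast
  have "ereal (f z) + g z < \<infinity>" using z[rule_format, of x1] x1
    by (cases "g x1") auto
  moreover have "g z \<noteq> -\<infinity>" using g_not_minf by blast
  ultimately obtain r where r: "g z = ereal r" by (cases "g z") auto
  show ?thesis using z r by (intro exI[of _ "f z + r"]) auto
qed

lemma phistar_le: "ereal phistar \<le> ereal (f y) + g y"
  using someI_ex[OF phistar_ex] unfolding phistar_def by blast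

lemma g_lower: "ereal (phistar - f u) \<le> g u"
  using phistar_le[of u] by (cases "g u") auto

definition pobj :: "real ^ 'n \<Rightarrow> real ^ 'n \<Rightarrow> ereal" where
  "pobj y u = g u + ereal ((norm (u - y))\<^sup>2 / (2 * \<gamma>))"

definition c0 :: real where "c0 = (1 / \<gamma> - Lf) / 2"

lemma c0_pos: "0 < c0"
proof -
  have "Lf < 1 / \<gamma>" using gamL gam_pos by (simp add: field_simps mult.commute)
  then show ?thesis unfolding c0_def by simp
qed

lemma pobj_lower:
  "ereal (phistar - f y - norm (gf y) * norm (u - y) + c0 * (norm (u - y))\<^sup>2) \<le> pobj y u"
proof -
  have d: "f u \<le> f y + gf y \<bullet> (u - y) + Lf / 2 * (norm (u - y))\<^sup>2" by (rule descent)
  have cs: "gf y \<bullet> (u - y) \<le> norm (gf y) * norm (u - y)" by (rule norm_cauchy_schwarz)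
  have e: "c0 * (norm (u - y))\<^sup>2 = (norm (u - y))\<^sup>2 / (2 * \<gamma>) - Lf / 2 * (norm (u - y))\<^sup>2"
    unfolding c0_def using gam_pos by (simp add: field_simps)
  have "phistar - f y - norm (gf y) * norm (u - y) + c0 * (norm (u - y))\<^sup>2
        \<le> (phistar - f u) + (norm (u - y))\<^sup>2 / (2 * \<gamma>)"
    using d cs e by linarith
  then have "ereal (phistar - f y - norm (gf y) * norm (u - y) + c0 * (norm (u - y))\<^sup>2)
        \<le> ereal (phistar - f u) + ereal ((norm (u - y))\<^sup>2 / (2 * \<gamma>))" by simp
  also have "\<dots> \<le> pobj y u" unfolding pobj_def by (intro add_right_mono g_lower)
  finally show ?thesis .
qed

lemma quad_bound:
  fixes a C r :: real
  assumes "0 < c" "0 \<le> r" "0 \<le> a" "c * r\<^sup>2 - a * r \<le> C"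
  shows "r \<le> max 1 ((a + \<bar>C\<bar>) / c)"
proof (rule ccontr)
  assume "\<not> ?thesis"
  then have r1: "1 < r" and r2: "(a + \<bar>C\<bar>) / c < r" by auto
  from r2 have "a + \<bar>C\<bar> < c * r" using assms(1) by (simp add: field_simps)
  then have "c * r - a > \<bar>C\<bar>" by simp
  then have "r * (c * r - a) > r * \<bar>C\<bar>" using r1 by (simp add: mult_strict_left_mono)
  moreover have "r * \<bar>C\<bar> \<ge> \<bar>C\<bar>" using r1 by (simp add: mult_le_cancel_right1)
  ultimately have "c * r\<^sup>2 - a * r > C" by (simp add: power2_eq_square algebra_simps)
  then show False using assms(4) by simp
qed

lemma pobj_bounded:
  assumes "pobj y u \<le> ereal T"
  shows "norm (u - y) \<le> max 1 ((norm (gf y) + \<bar>T - phistar + f y\<bar>) / c0)"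
proof (rule quad_bound[OF c0_pos norm_ge_zero norm_ge_zero])
  have "ereal (phistar - f y - norm (gf y) * norm (u - y) + c0 * (norm (u - y))\<^sup>2) \<le> ereal T"
    using pobj_lower assms order_trans by blast
  then show "c0 * (norm (u - y))\<^sup>2 - norm (gf y) * norm (u - y) \<le> T - phistar + f y" by simp
qed

lemma lsc_nbhd:
  assumes "ereal b < g u"
  shows "\<exists>e>0. \<forall>y. dist y u < e \<longrightarrow> ereal b < g y"
proof -
  have "g u \<le> Liminf (at u) g" using g_lsc unfolding lsc_fun_def by blast
  then have "eventually (\<lambda>y. ereal b < g y) (at u)" using assms le_Liminf_iff by blast
  then obtain e where e: "e > 0" "\<forall>y. y \<noteq> u \<and> dist y u < e \<longrightarrow> ereal b < g y"
    unfolding eventually_at by auto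
  show ?thesis using e assms by (intro exI[of _ e]) auto
qed

lemma lsc_plus_seq:
  assumes q: "continuous_on UNIV q" and s: "s \<longlonglongrightarrow> u"
    and le: "\<forall>n. g (s n) + ereal (q (s n)) \<le> ereal c"
  shows "g u + ereal (q u) \<le> ereal c"
proof (rule ccontr)
  assume "\<not> ?thesis"
  then have "ereal c < g u + ereal (q u)" by simp
  then have "ereal (c - q u) < g u" by (cases "g u") auto
  then obtain b where b1: "ereal (c - q u) < ereal b" and b2: "ereal b < g u"
    using ereal_dense2 by blast
  obtain e where e: "e > 0" "\<forall>y. dist y u < e \<longrightarrow> ereal b < g y" using lsc_nbhd[OF b2] by blast
  have ev1: "eventually (\<lambda>n. dist (s n) u < e) sequentially"
    using s e(1) by (rule tendstoD)
  have qs: "(\<lambda>n. q (s n)) \<longlonglongrightarrow> q u"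
    using q s by (intro continuous_on_tendsto_compose[OF q s]) auto
  have "c - b < q u" using b1 by simp
  then have ev2: "eventually (\<lambda>n. c - b < q (s n)) sequentially"
    using qs by (rule order_tendstoD(1)[rotated])
  from eventually_conj[OF ev1 ev2] obtain N where
    N: "\<forall>n\<ge>N. dist (s n) u < e \<and> c - b < q (s n)" by (auto simp: eventually_sequentially)
  then have "ereal b < g (s N)" "c - b < q (s N)" using e by auto
  then have "ereal c < g (s N) + ereal (q (s N))" by (cases "g (s N)") auto
  then show False using le by (simp add: not_le[symmetric])
qed

lemma pobj_not_minf: "pobj y u \<noteq> -\<infinity>"
  unfolding pobj_def using g_not_minf[of u] by (cases "g u") auto

lemma pobj_fin_ex: "\<exists>x1. pobj y x1 < \<infinity>"
proof -
  obtain x1 where "g x1 < \<infinity>" using g_fin_ex by blast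
  then show ?thesis unfolding pobj_def by (intro exI[of _ x1]) (cases "g x1"; auto)
qed

lemma pobj_min_ex: "\<exists>p. \<forall>u. pobj y p \<le> pobj y u"
proof -
  define m where "m = (INF u. pobj y u)"
  obtain x1 where x1: "pobj y x1 < \<infinity>" using pobj_fin_ex by blast
  have mup: "m < \<infinity>" unfolding m_def using x1 by (meson INF_lower UNIV_I order_le_less_trans)
  define lb where "lb = phistar - f y - (norm (gf y))\<^sup>2 / (4 * c0)"
  have lbu: "ereal lb \<le> pobj y u" for u
  proof -
    have "0 \<le> (2 * c0 * norm (u - y) - norm (gf y))\<^sup>2 / (4 * c0)" using c0_pos by simp
    also have "(2 * c0 * norm (u - y) - norm (gf y))\<^sup>2 / (4 * c0)
       = c0 * (norm (u - y))\<^sup>2 - norm (gf y) * norm (u - y) + (norm (gf y))\<^sup>2 / (4 * c0)"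
      using c0_pos by (simp add: field_simps power2_eq_square)
    finally have "lb \<le> phistar - f y - norm (gf y) * norm (u - y) + c0 * (norm (u - y))\<^sup>2"
      unfolding lb_def by simp
    then show ?thesis using pobj_lower[of y u] by (meson ereal_less_eq(3) order_trans)
  qed
  have mlb: "ereal lb \<le> m" unfolding m_def by (rule INF_greatest) (use lbu in auto)
  obtain mr where mr: "m = ereal mr" using mup mlb by (cases m) auto
  have "\<forall>n. \<exists>u. pobj y u < ereal (mr + 1 / Suc n)"
  proof
    fix n
    have "m < ereal (mr + 1 / Suc n)" using mr by simp
    then show "\<exists>u. pobj y u < ereal (mr + 1 / Suc n)" unfolding m_def INF_less_iff by blast
  qed
  then obtain s where s: "\<forall>n. pobj y (s n) < ereal (mr + 1 / Suc n)" by metis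
  define Rb where "Rb = max 1 ((norm (gf y) + \<bar>(mr + 1) - phistar + f y\<bar>) / c0)"
  have sin: "s n \<in> cball y Rb" for n
  proof -
    have "1 / real (Suc n) \<le> 1" by simp
    then have "pobj y (s n) \<le> ereal (mr + 1)" using s[rule_format, of n]
      by (meson ereal_less_eq(3) add_left_mono less_imp_le order_trans)
    from pobj_bounded[OF this] show ?thesis unfolding Rb_def by (simp add: dist_norm norm_minus_commute)
  qed
  obtain l r where r: "strict_mono r" and lim: "(s \<circ> r) \<longlonglongrightarrow> l"
    using compact_imp_seq_compact[OF compact_cball] sin unfolding seq_compact_def by metis
  have bndN: "pobj y l \<le> ereal (mr + 1 / Suc N)" for N
  proof -
    have lim2: "(\<lambda>n. s (r (n + N))) \<longlonglongrightarrow> l"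
      using LIMSEQ_ignore_initial_segment[OF lim, of N] by (simp add: comp_def)
    have allb: "\<forall>n. g (s (r (n + N))) + ereal ((norm (s (r (n + N)) - y))\<^sup>2 / (2 * \<gamma>)) \<le> ereal (mr + 1 / Suc N)"
    proof
      fix n
      have "N \<le> r (n + N)" using seq_suble[OF r, of "n + N"] by simp
      then have "1 / real (Suc (r (n + N))) \<le> 1 / Suc N" by (simp add: frac_le)
      then show "g (s (r (n + N))) + ereal ((norm (s (r (n + N)) - y))\<^sup>2 / (2 * \<gamma>)) \<le> ereal (mr + 1 / Suc N)"
        using s[rule_format, of "r (n + N)"] unfolding pobj_def
        by (meson ereal_less_eq(3) add_left_mono less_imp_le order_trans)
    qed
    have qc: "continuous_on UNIV (\<lambda>a. (norm (a - y))\<^sup>2 / (2 * \<gamma>))"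
      using gam_pos by (intro continuous_intros) auto
    have "g l + ereal ((norm (l - y))\<^sup>2 / (2 * \<gamma>)) \<le> ereal (mr + 1 / Suc N)"
      using lsc_plus_seq[OF qc lim2] allb by simp
    then show ?thesis unfolding pobj_def by simp
  qed
  have "pobj y l \<le> m"
  proof -
    obtain v where v: "pobj y l = ereal v" using bndN[of 0] pobj_not_minf[of y l] by (cases "pobj y l") auto
    have "v \<le> mr"
    proof (rule ccontr)
      assume "\<not> v \<le> mr"
      then obtain n where n: "n > 0" "inverse (real n) < v - mr" using ex_inverse_of_nat_less[of "v - mr"] by auto
      have "1 / real (Suc n) \<le> inverse (real n)" using n(1) by (simp add: field_simps)
      then show False using bndN[of n] v n(2) by simp
    qed
    then show ?thesis using v mr by simp
  qed
  then show ?thesis unfolding m_def by (meson INF_lower UNIV_I order_trans)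
qed

definition alpha :: real where "alpha = 1 / \<gamma> - \<rho>"

lemma alpha_pos: "0 < alpha"
proof -
  have "\<rho> < 1 / \<gamma>" using gamrho gam_pos by (simp add: field_simps mult.commute)
  then show ?thesis unfolding alpha_def by simp
qed

lemma gam_alpha: "\<gamma> * alpha = 1 - \<gamma> * \<rho>"
  unfolding alpha_def using gam_pos by (simp add: field_simps)

lemma norm_comb:
  fixes a b :: "'a::real_inner"
  shows "(norm ((1 - t) *\<^sub>R a + t *\<^sub>R b))\<^sup>2 = (1 - t) * (norm a)\<^sup>2 + t * (norm b)\<^sup>2 - t * (1 - t) * (norm (a - b))\<^sup>2"
  by (simp add: power2_norm_eq_inner inner_add_left inner_add_right inner_diff_left inner_diff_right
      inner_commute algebra_simps)

lemma pobj_strong: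
  assumes p: "\<forall>w. pobj y p \<le> pobj y w"
  shows "pobj y p + ereal (alpha / 2 * (norm (u - p))\<^sup>2) \<le> pobj y u"
proof (cases "g u = \<infinity>")
  case True
  then show ?thesis unfolding pobj_def by simp
next
  case False
  obtain gu where gu: "g u = ereal gu" using False g_not_minf[of u] by (cases "g u") auto
  have "pobj y p \<le> pobj y u" using p by blast
  also have "pobj y u < \<infinity>" unfolding pobj_def gu by simp
  finally have "g p \<noteq> \<infinity>" unfolding pobj_def by auto
  then obtain gp where gp: "g p = ereal gp" using g_not_minf[of p] by (cases "g p") auto
  define D where "D = (norm (u - p))\<^sup>2"
  define Fp where "Fp = gp + (norm (p - y))\<^sup>2 / (2 * \<gamma>)"
  define Fu where "Fu = gu + (norm (u - y))\<^sup>2 / (2 * \<gamma>)"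
  have Fpe: "pobj y p = ereal Fp" unfolding pobj_def Fp_def gp by simp
  have Fue: "pobj y u = ereal Fu" unfolding pobj_def Fu_def gu by simp
  have key: "alpha / 2 * (1 - t) * D \<le> Fu - Fp" if t: "0 < t" "t \<le> 1" for t
  proof -
    define w where "w = (1 - t) *\<^sub>R p + t *\<^sub>R u"
    have wc: "g w + ereal (\<rho> / 2 * (norm w)\<^sup>2) \<le> ereal (1 - t) * (g p + ereal (\<rho> / 2 * (norm p)\<^sup>2))
        + ereal t * (g u + ereal (\<rho> / 2 * (norm u)\<^sup>2))"
      using g_wc t unfolding weakly_convex_def ereal_convex_def w_def by auto
    define A where "A = (1 - t) * (gp + \<rho> / 2 * (norm p)\<^sup>2) + t * (gu + \<rho> / 2 * (norm u)\<^sup>2)"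
    have wc2: "g w + ereal (\<rho> / 2 * (norm w)\<^sup>2) \<le> ereal A"
      using wc unfolding A_def gp gu by simp
    then obtain gw where gw: "g w = ereal gw" using g_not_minf[of w] by (cases "g w") auto
    have gw_le: "gw + \<rho> / 2 * (norm w)\<^sup>2 \<le> A" using wc2 gw by simp
    have nw: "(norm w)\<^sup>2 = (1 - t) * (norm p)\<^sup>2 + t * (norm u)\<^sup>2 - t * (1 - t) * D"
      unfolding w_def D_def using norm_comb[of t p u] by (simp add: norm_minus_commute)
    have wy: "w - y = (1 - t) *\<^sub>R (p - y) + t *\<^sub>R (u - y)"
      unfolding w_def by (simp add: algebra_simps)
    have nwy: "(norm (w - y))\<^sup>2 = (1 - t) * (norm (p - y))\<^sup>2 + t * (norm (u - y))\<^sup>2 - t * (1 - t) * D"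
      unfolding wy D_def using norm_comb[of t "p - y" "u - y"] by (simp add: norm_minus_commute)
    have "pobj y p \<le> pobj y w" using p by blast
    then have "ereal Fp \<le> pobj y w" using Fpe by simp
    then have Fpw: "Fp \<le> gw + (norm (w - y))\<^sup>2 / (2 * \<gamma>)" unfolding pobj_def gw by simp
    have ident: "A - \<rho> / 2 * (norm w)\<^sup>2 + (norm (w - y))\<^sup>2 / (2 * \<gamma>)
        = (1 - t) * Fp + t * Fu - alpha / 2 * t * (1 - t) * D"
      unfolding A_def nw nwy Fp_def Fu_def alpha_def using gam_pos
      by (simp add: field_simps)
    have "Fp \<le> (1 - t) * Fp + t * Fu - alpha / 2 * t * (1 - t) * D"
      using Fpw gw_le ident by linarith
    then have "t * (alpha / 2 * (1 - t) * D) \<le> t * (Fu - Fp)" by (simp add: algebra_simps)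
    then show ?thesis by (rule mult_left_le_imp_le[OF _ t(1)])
  qed
  have "alpha / 2 * D \<le> Fu - Fp"
  proof (rule ccontr)
    assume c: "\<not> ?thesis"
    define A' where "A' = alpha / 2 * D"
    define df where "df = Fu - Fp"
    have df0: "0 \<le> df" using key[of 1] unfolding df_def by simp
    have lt: "df < A'" using c unfolding A'_def df_def by simp
    then have A'pos: "0 < A'" using df0 by simp
    define t where "t = (A' - df) / (2 * A')"
    have t0: "0 < t" unfolding t_def using lt A'pos by simp
    have t1: "t \<le> 1" unfolding t_def using lt A'pos df0 by (simp add: field_simps)
    have "A' * (1 - t) = (A' + df) / 2" unfolding t_def using A'pos by (simp add: field_simps)
    moreover have "A' * (1 - t) \<le> df" using key[OF t0 t1] unfolding A'_def df_def by (simp add: ac_simps)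
    ultimately show False using lt by simp
  qed
  then show ?thesis unfolding Fpe Fue D_def by simp
qed

lemma pobj_min_fin:
  assumes p: "\<forall>w. pobj y p \<le> pobj y w"
  shows "g p \<noteq> \<infinity>" "pobj y p < \<infinity>"
proof -
  obtain x1 where x1: "pobj y x1 < \<infinity>" using pobj_fin_ex by blast
  show "pobj y p < \<infinity>" using p x1 order_le_less_trans by blast
  then show "g p \<noteq> \<infinity>" unfolding pobj_def by auto
qed

lemma pobj_unique:
  assumes p: "\<forall>w. pobj y p \<le> pobj y w" and p': "\<forall>w. pobj y p' \<le> pobj y w"
  shows "p' = p"
proof -
  have 1: "pobj y p + ereal (alpha / 2 * (norm (p' - p))\<^sup>2) \<le> pobj y p'" by (rule pobj_strong[OF p])
  have 2: "pobj y p' \<le> pobj y p" using p' by blast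
  obtain v where v: "pobj y p = ereal v" using pobj_min_fin(2)[OF p] pobj_not_minf[of y p]
    by (cases "pobj y p") auto
  have "alpha / 2 * (norm (p' - p))\<^sup>2 \<le> 0" using 1 2 v
    by (cases "pobj y p'") auto
  then have "(norm (p' - p))\<^sup>2 \<le> 0" using alpha_pos by (simp add: mult_le_0_iff)
  then show ?thesis by simp
qed

lemma prox_min: "\<forall>w. pobj y (prox \<gamma> g y) \<le> pobj y w"
proof -
  have "\<exists>!z. \<forall>w. pobj y z \<le> pobj y w"
    using pobj_min_ex[of y] pobj_unique[of y] by blast
  from theI'[OF this] show ?thesis unfolding prox_def pobj_def .
qed

definition gr :: "real ^ 'n \<Rightarrow> real" where "gr u = real_of_ereal (g u)"

lemma prox_g_fin: "g (prox \<gamma> g y) = ereal (gr (prox \<gamma> g y))"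
  using pobj_min_fin(1)[OF prox_min] g_not_minf unfolding gr_def
  by (cases "g (prox \<gamma> g y)") auto

lemma pobj_real: "g u = ereal (gr u) \<Longrightarrow> pobj y u = ereal (gr u + (norm (u - y))\<^sup>2 / (2 * \<gamma>))"
  unfolding pobj_def by simp

definition Kp :: real where "Kp = 1 / (1 - \<gamma> * \<rho>)"

lemma Kp_pos: "0 < Kp" unfolding Kp_def using gamrho by simp

lemma four_id:
  fixes p p' y y' :: "'a::real_inner"
  shows "(norm (p' - y))\<^sup>2 - (norm (p - y))\<^sup>2 + (norm (p - y'))\<^sup>2 - (norm (p' - y'))\<^sup>2 = 2 * ((p - p') \<bullet> (y - y'))"
  by (simp add: power2_norm_eq_inner inner_diff_left inner_diff_right inner_commute algebra_simps)

lemma prox_lip: "norm (prox \<gamma> g y - prox \<gamma> g y') \<le> Kp * norm (y - y')"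
proof -
  define p where "p = prox \<gamma> g y"
  define p' where "p' = prox \<gamma> g y'"
  define D where "D = (norm (p - p'))\<^sup>2"
  have h1: "pobj y p + ereal (alpha / 2 * D) \<le> pobj y p'"
    using pobj_strong[OF prox_min[of y], of p'] unfolding p_def p'_def D_def by (simp add: norm_minus_commute)
  have h2: "pobj y' p' + ereal (alpha / 2 * D) \<le> pobj y' p"
    using pobj_strong[OF prox_min[of y'], of p] unfolding p_def p'_def D_def by simp
  have gp: "g p = ereal (gr p)" unfolding p_def by (rule prox_g_fin)
  have gp': "g p' = ereal (gr p')" unfolding p'_def by (rule prox_g_fin)
  have r1: "gr p + (norm (p - y))\<^sup>2 / (2 * \<gamma>) + alpha / 2 * D \<le> gr p' + (norm (p' - y))\<^sup>2 / (2 * \<gamma>)"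
    using h1 unfolding pobj_real[OF gp] pobj_real[OF gp'] by simp
  have r2: "gr p' + (norm (p' - y'))\<^sup>2 / (2 * \<gamma>) + alpha / 2 * D \<le> gr p + (norm (p - y'))\<^sup>2 / (2 * \<gamma>)"
    using h2 unfolding pobj_real[OF gp] pobj_real[OF gp'] by simp
  have "alpha * D \<le> (norm (p' - y))\<^sup>2 / (2 * \<gamma>) - (norm (p - y))\<^sup>2 / (2 * \<gamma>) + (norm (p - y'))\<^sup>2 / (2 * \<gamma>) - (norm (p' - y'))\<^sup>2 / (2 * \<gamma>)"
    using r1 r2 by linarith
  also have "\<dots> = ((norm (p' - y))\<^sup>2 - (norm (p - y))\<^sup>2 + (norm (p - y'))\<^sup>2 - (norm (p' - y'))\<^sup>2) / (2 * \<gamma>)"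
    by (simp add: diff_divide_distrib add_divide_distrib)
  also have "\<dots> = ((p - p') \<bullet> (y - y')) / \<gamma>" unfolding four_id by simp
  also have "\<dots> \<le> norm (p - p') * norm (y - y') / \<gamma>"
    using gam_pos by (simp add: divide_right_mono norm_cauchy_schwarz)
  finally have A: "alpha * (norm (p - p'))\<^sup>2 \<le> norm (p - p') * norm (y - y') / \<gamma>" unfolding D_def .
  show ?thesis
  proof (cases "p = p'")
    case True
    then show ?thesis using Kp_pos unfolding p_def p'_def by simp
  next
    case False
    then have np: "0 < norm (p - p')" by simp
    from A have "norm (p - p') * (alpha * norm (p - p')) \<le> norm (p - p') * (norm (y - y') / \<gamma>)"
      by (simp add: power2_eq_square algebra_simps)
    then have "alpha * norm (p - p') \<le> norm (y - y') / \<gamma>" by (rule mult_left_le_imp_le[OF _ np])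
    then have "\<gamma> * alpha * norm (p - p') \<le> norm (y - y')" using gam_pos by (simp add: field_simps)
    then have "norm (p - p') \<le> norm (y - y') / (\<gamma> * alpha)" using gam_pos alpha_pos by (simp add: field_simps)
    then show ?thesis unfolding p_def p'_def Kp_def gam_alpha[symmetric] by simp
  qed
qed

lemma prox_cont: "continuous_on UNIV (prox \<gamma> g)"
proof -
  have "Kp-lipschitz_on UNIV (prox \<gamma> g)"
    unfolding lipschitz_on_def dist_norm using prox_lip Kp_pos by auto
  then show ?thesis by (rule lipschitz_on_continuous_on)
qed

definition Mor :: "real ^ 'n \<Rightarrow> real" where
  "Mor y = gr (prox \<gamma> g y) + (norm (prox \<gamma> g y - y))\<^sup>2 / (2 * \<gamma>)"

definition wM :: "real ^ 'n \<Rightarrow> real ^ 'n" where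
  "wM y = (1 / \<gamma>) *\<^sub>R (y - prox \<gamma> g y)"

lemma Mor_pobj: "pobj y (prox \<gamma> g y) = ereal (Mor y)"
  unfolding Mor_def using pobj_real[OF prox_g_fin] .

lemma Mor_le: "g u = ereal (gr u) \<Longrightarrow> Mor y \<le> gr u + (norm (u - y))\<^sup>2 / (2 * \<gamma>)"
  using prox_min[of y] Mor_pobj[of y] pobj_real[of u y] by (metis ereal_less_eq(3))

lemma Mor_upper: "Mor y' - Mor y \<le> wM y \<bullet> (y' - y) + (norm (y' - y))\<^sup>2 / (2 * \<gamma>)"
proof -
  define p where "p = prox \<gamma> g y"
  have 1: "Mor y' \<le> gr p + (norm (p - y'))\<^sup>2 / (2 * \<gamma>)" unfolding p_def by (rule Mor_le[OF prox_g_fin])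
  have 2: "Mor y = gr p + (norm (p - y))\<^sup>2 / (2 * \<gamma>)" unfolding p_def Mor_def ..
  have 3: "(norm (p - y'))\<^sup>2 = (norm (p - y))\<^sup>2 + 2 * ((y - p) \<bullet> (y' - y)) + (norm (y' - y))\<^sup>2"
    by (simp add: power2_norm_eq_inner inner_diff_left inner_diff_right inner_commute algebra_simps)
  have 4: "wM y \<bullet> (y' - y) = ((y - p) \<bullet> (y' - y)) / \<gamma>" unfolding wM_def p_def by simp
  show ?thesis using 1 2 3 4 gam_pos by (simp add: field_simps)
qed

definition CM :: real where "CM = (1 + Kp) / \<gamma> + 1 / (2 * \<gamma>)"

lemma wM_lip: "norm (wM y' - wM y) \<le> (1 + Kp) / \<gamma> * norm (y' - y)"
proof -
  have "wM y' - wM y = (1 / \<gamma>) *\<^sub>R ((y' - y) - (prox \<gamma> g y' - prox \<gamma> g y))"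
    unfolding wM_def by (simp add: algebra_simps)
  then have "norm (wM y' - wM y) = (1 / \<gamma>) * norm ((y' - y) - (prox \<gamma> g y' - prox \<gamma> g y))"
    using gam_pos by simp
  also have "\<dots> \<le> (1 / \<gamma>) * (norm (y' - y) + Kp * norm (y' - y))"
    using gam_pos prox_lip[of y' y] norm_triangle_ineq4[of "y' - y" "prox \<gamma> g y' - prox \<gamma> g y"]
    by (intro mult_left_mono) auto
  finally show ?thesis using gam_pos by (simp add: field_simps)
qed

lemma Mor_diff: "\<bar>Mor y' - Mor y - wM y \<bullet> (y' - y)\<bar> \<le> CM * (norm (y' - y))\<^sup>2"
proof -
  have u: "Mor y' - Mor y - wM y \<bullet> (y' - y) \<le> (norm (y' - y))\<^sup>2 / (2 * \<gamma>)"
    using Mor_upper[of y' y] by simp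
  have l0: "Mor y - Mor y' \<le> wM y' \<bullet> (y - y') + (norm (y - y'))\<^sup>2 / (2 * \<gamma>)"
    by (rule Mor_upper)
  have c: "(wM y' - wM y) \<bullet> (y' - y) \<ge> - ((1 + Kp) / \<gamma> * (norm (y' - y))\<^sup>2)"
  proof -
    have "\<bar>(wM y' - wM y) \<bullet> (y' - y)\<bar> \<le> norm (wM y' - wM y) * norm (y' - y)"
      by (rule Cauchy_Schwarz_ineq2)
    also have "\<dots> \<le> (1 + Kp) / \<gamma> * norm (y' - y) * norm (y' - y)"
      by (intro mult_right_mono wM_lip) auto
    finally show ?thesis by (simp add: power2_eq_square)
  qed
  have l: "Mor y' - Mor y - wM y \<bullet> (y' - y) \<ge> - ((1 + Kp) / \<gamma> * (norm (y' - y))\<^sup>2) - (norm (y' - y))\<^sup>2 / (2 * \<gamma>)"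
  proof -
    have e1: "wM y' \<bullet> (y - y') = - (wM y' \<bullet> (y' - y))" by (simp add: inner_diff_right)
    have e2: "(norm (y - y'))\<^sup>2 / (2 * \<gamma>) = (norm (y' - y))\<^sup>2 / (2 * \<gamma>)" by (metis norm_minus_commute)
    have e3: "wM y' \<bullet> (y' - y) - wM y \<bullet> (y' - y) = (wM y' - wM y) \<bullet> (y' - y)" by (simp add: inner_diff_left)
    show ?thesis using l0 c e1 e2 e3 by linarith
  qed
  have pos: "0 \<le> (norm (y' - y))\<^sup>2 / (2 * \<gamma>)" using gam_pos by simp
  have "CM * (norm (y' - y))\<^sup>2 = (1 + Kp) / \<gamma> * (norm (y' - y))\<^sup>2 + (norm (y' - y))\<^sup>2 / (2 * \<gamma>)"
    unfolding CM_def by (simp add: algebra_simps)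
  moreover have "0 \<le> (1 + Kp) / \<gamma> * (norm (y' - y))\<^sup>2" using Kp_pos gam_pos by simp
  ultimately show ?thesis using u l pos by linarith
qed

lemma Mor_deriv: "(Mor has_derivative (\<lambda>h. wM y \<bullet> h)) (at y)"
  unfolding has_derivative_iff_norm
proof
  show "bounded_linear ((\<bullet>) (wM y))" by (rule bounded_linear_inner_right)
  have t: "((\<lambda>y'. y' - y) \<longlongrightarrow> 0) (at y)"
  proof -
    have "((\<lambda>y'. y' - y) \<longlongrightarrow> y - y) (at y)" by (intro tendsto_intros)
    then show ?thesis by simp
  qed
  show "((\<lambda>y'. norm (Mor y' - Mor y - wM y \<bullet> (y' - y)) / norm (y' - y)) \<longlongrightarrow> 0) (at y)"
  proof (rule tendsto_0_le[OF t, of _ CM], rule always_eventually, rule allI)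
    fix y'
    show "norm (norm (Mor y' - Mor y - wM y \<bullet> (y' - y)) / norm (y' - y)) \<le> norm (y' - y) * CM"
    proof (cases "y' = y")
      case True then show ?thesis by simp
    next
      case False
      then have np: "0 < norm (y' - y)" by simp
      have "\<bar>Mor y' - Mor y - wM y \<bullet> (y' - y)\<bar> \<le> CM * (norm (y' - y))\<^sup>2" by (rule Mor_diff)
      then have "\<bar>Mor y' - Mor y - wM y \<bullet> (y' - y)\<bar> / norm (y' - y) \<le> CM * (norm (y' - y))\<^sup>2 / norm (y' - y)"
        using np by (simp add: divide_right_mono)
      also have "\<dots> = norm (y' - y) * CM" using np by (simp add: power2_eq_square)
      finally show ?thesis by simp
    qed
  qed
qed

lemma psi_id:
  "f x + gf x \<bullet> (u - x) + (norm (u - x))\<^sup>2 / (2 * \<gamma>)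
    = (norm (u - (x - \<gamma> *\<^sub>R gf x)))\<^sup>2 / (2 * \<gamma>) + (f x - \<gamma> / 2 * (gf x \<bullet> gf x))"
proof -
  have "(norm (u - (x - \<gamma> *\<^sub>R gf x)))\<^sup>2 = (norm (u - x))\<^sup>2 + 2 * \<gamma> * (gf x \<bullet> (u - x)) + \<gamma> * \<gamma> * (gf x \<bullet> gf x)"
    by (simp add: power2_norm_eq_inner inner_diff_left inner_diff_right inner_add_left inner_add_right
        inner_commute algebra_simps)
  then show ?thesis using gam_pos by (simp add: field_simps power2_eq_square)
qed

lemma fbe_eq: "fbe \<gamma> f gf g x = f x - \<gamma> / 2 * (gf x \<bullet> gf x) + Mor (x - \<gamma> *\<^sub>R gf x)"
proof -
  define y where "y = x - \<gamma> *\<^sub>R gf x"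
  define cst where "cst = f x - \<gamma> / 2 * (gf x \<bullet> gf x)"
  have pt: "ereal (f x + gf x \<bullet> (u - x) + (norm (u - x))\<^sup>2 / (2 * \<gamma>)) + g u = pobj y u + ereal cst" for u
  proof -
    have eqr: "f x + gf x \<bullet> (u - x) + (norm (u - x))\<^sup>2 / (2 * \<gamma>)
        = (norm (u - y))\<^sup>2 / (2 * \<gamma>) + cst"
      unfolding y_def cst_def by (rule psi_id)
    show ?thesis unfolding pobj_def eqr by (cases "g u") auto
  qed
  have "(INF u. ereal (f x + gf x \<bullet> (u - x) + (norm (u - x))\<^sup>2 / (2 * \<gamma>)) + g u)
      = pobj y (prox \<gamma> g y) + ereal cst"
    unfolding pt
  proof (rule antisym)
    show "(INF u. pobj y u + ereal cst) \<le> pobj y (prox \<gamma> g y) + ereal cst" by (rule INF_lower) simp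
    show "pobj y (prox \<gamma> g y) + ereal cst \<le> (INF u. pobj y u + ereal cst)"
      using prox_min[of y] by (intro INF_greatest add_right_mono) auto
  qed
  then show ?thesis unfolding fbe_def Mor_pobj y_def cst_def by simp
qed

definition Gf :: "real ^ 'n \<Rightarrow> real ^ 'n" where
  "Gf x = resid \<gamma> gf g x - \<gamma> *\<^sub>R (resid \<gamma> gf g x v* Hf x)"

lemma fbe_deriv: "(fbe \<gamma> f gf g has_derivative (\<lambda>h. Gf x \<bullet> h)) (at x)"
proof -
  have e: "fbe \<gamma> f gf g = (\<lambda>x. f x - \<gamma> / 2 * (gf x \<bullet> gf x) + Mor (x - \<gamma> *\<^sub>R gf x))"
    using fbe_eq by (simp add: fun_eq_iff)
  define y where "y = x - \<gamma> *\<^sub>R gf x"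
  have d1: "((\<lambda>x. x - \<gamma> *\<^sub>R gf x) has_derivative (\<lambda>h. h - \<gamma> *\<^sub>R (Hf x *v h))) (at x)"
    by (intro derivative_intros gf_deriv)
  have d2: "((\<lambda>x. Mor (x - \<gamma> *\<^sub>R gf x)) has_derivative (\<lambda>h. wM y \<bullet> (h - \<gamma> *\<^sub>R (Hf x *v h)))) (at x)"
    using has_derivative_compose[OF d1 Mor_deriv] unfolding y_def by simp
  have d3: "((\<lambda>x. gf x \<bullet> gf x) has_derivative (\<lambda>h. gf x \<bullet> (Hf x *v h) + (Hf x *v h) \<bullet> gf x)) (at x)"
    using has_derivative_inner[OF gf_deriv gf_deriv] .
  have d4: "((\<lambda>x. f x - \<gamma> / 2 * (gf x \<bullet> gf x) + Mor (x - \<gamma> *\<^sub>R gf x)) has_derivative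
      (\<lambda>h. gf x \<bullet> h - \<gamma> / 2 * (gf x \<bullet> (Hf x *v h) + (Hf x *v h) \<bullet> gf x) + wM y \<bullet> (h - \<gamma> *\<^sub>R (Hf x *v h)))) (at x)"
    by (intro has_derivative_add has_derivative_diff has_derivative_mult_right f_deriv d2 d3)
  have wr: "wM y = resid \<gamma> gf g x - gf x"
    unfolding wM_def resid_def y_def using gam_pos by (simp add: algebra_simps)
  have aux: "h \<bullet> (v v* A) = (A *v h) \<bullet> v" for h v :: "real ^ 'n" and A :: "'n mat"
    by (metis dot_lmul_matrix inner_commute)
  have "(\<lambda>h. gf x \<bullet> h - \<gamma> / 2 * (gf x \<bullet> (Hf x *v h) + (Hf x *v h) \<bullet> gf x) + wM y \<bullet> (h - \<gamma> *\<^sub>R (Hf x *v h)))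
      = (\<lambda>h. Gf x \<bullet> h)"
    unfolding wr Gf_def
    by (rule ext) (simp add: inner_diff_left inner_diff_right aux inner_commute algebra_simps)
  then show ?thesis using d4 e by simp
qed

lemma grad_unique:
  assumes "(F has_derivative (\<lambda>h. D \<bullet> h)) (at x)"
  shows "grad F x = D"
  unfolding grad_def
proof (rule the_equality)
  show "(F has_derivative (\<lambda>h. D \<bullet> h)) (at x)" by fact
  fix D' assume "(F has_derivative (\<lambda>h. D' \<bullet> h)) (at x)"
  from has_derivative_unique[OF this assms] have "(\<lambda>h. D' \<bullet> h) = (\<lambda>h. D \<bullet> h)" .
  then have "D' \<bullet> (D' - D) = D \<bullet> (D' - D)" by metis
  then have "(D' - D) \<bullet> (D' - D) = 0" by (simp add: inner_diff_left)
  then show "D' = D" by simp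
qed

lemma grad_fbe: "grad (fbe \<gamma> f gf g) x = Gf x"
  by (rule grad_unique[OF fbe_deriv])

lemma resid_zero_Gf: "resid \<gamma> gf g x = 0 \<Longrightarrow> Gf x = 0"
  unfolding Gf_def by simp

lemma vm_cont:
  assumes "continuous_on S v" "continuous_on S A"
  shows "continuous_on S (\<lambda>x. (v x :: real ^ 'm::finite) v* (A x :: real ^ 'k::finite ^ 'm))"
  unfolding vector_matrix_mult_def
  by (intro continuous_intros continuous_on_vec_lambda continuous_on_sum continuous_on_mult
      continuous_on_component assms)

lemma resid_cont: "continuous_on UNIV (resid \<gamma> gf g)"
proof -
  have "continuous_on UNIV (\<lambda>x. prox \<gamma> g (x - \<gamma> *\<^sub>R gf x))"
    by (rule continuous_on_compose2[OF prox_cont]) (auto intro!: continuous_intros gf_cont)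
  then show ?thesis unfolding resid_def[abs_def] by (intro continuous_intros)
qed

lemma Gf_cont: "continuous_on UNIV Gf"
  unfolding Gf_def[abs_def] by (intro continuous_intros vm_cont resid_cont Hf_cont)

lemma fbe_prox_form:
  "fbe \<gamma> f gf g x = f x + gf x \<bullet> (prox \<gamma> g (x - \<gamma> *\<^sub>R gf x) - x)
     + (norm (prox \<gamma> g (x - \<gamma> *\<^sub>R gf x) - x))\<^sup>2 / (2 * \<gamma>) + gr (prox \<gamma> g (x - \<gamma> *\<^sub>R gf x))"
  unfolding fbe_eq Mor_def psi_id by simp

lemma fbe_ge:
  fixes x :: "real ^ 'n"
  defines "p \<equiv> prox \<gamma> g (x - \<gamma> *\<^sub>R gf x)"
  shows "f p + gr p + c0 * (norm (p - x))\<^sup>2 \<le> fbe \<gamma> f gf g x"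
proof -
  have d: "f p \<le> f x + gf x \<bullet> (p - x) + Lf / 2 * (norm (p - x))\<^sup>2" by (rule descent)
  have e: "(norm (p - x))\<^sup>2 / (2 * \<gamma>) = Lf / 2 * (norm (p - x))\<^sup>2 + c0 * (norm (p - x))\<^sup>2"
    unfolding c0_def using gam_pos by (simp add: field_simps)
  show ?thesis unfolding fbe_prox_form p_def[symmetric] using d e by linarith
qed

lemma fbe_lb: "phistar \<le> fbe \<gamma> f gf g x"
proof -
  define p where "p = prox \<gamma> g (x - \<gamma> *\<^sub>R gf x)"
  have "ereal phistar \<le> ereal (f p) + g p" by (rule phistar_le)
  then have "phistar \<le> f p + gr p" unfolding p_def prox_g_fin by simp
  moreover have "0 \<le> c0 * (norm (p - x))\<^sup>2" using c0_pos by simp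
  ultimately show ?thesis using fbe_ge[of x] unfolding p_def by linarith
qed

lemma fbe_le_phi: "g x = ereal (gr x) \<Longrightarrow> fbe \<gamma> f gf g x \<le> f x + gr x"
  using Mor_le[of x "x - \<gamma> *\<^sub>R gf x"] psi_id[of x x] unfolding fbe_eq by simp

lemma level_bound:
  assumes bd: "bounded {y. ereal (f y) + g y \<le> ereal (f x0) + g x0}"
  shows "\<exists>R. \<forall>x. fbe \<gamma> f gf g x \<le> fbe \<gamma> f gf g x0 \<longrightarrow> norm x \<le> R"
proof -
  have gx0: "g x0 = ereal (gr x0)"
  proof (rule ccontr)
    assume "g x0 \<noteq> ereal (gr x0)"
    then have "g x0 = \<infinity>" using g_not_minf[of x0] unfolding gr_def by (cases "g x0") auto
    then have "{y. ereal (f y) + g y \<le> ereal (f x0) + g x0} = UNIV" by simp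
    then show False using bd by simp
  qed
  obtain Rl where Rl: "\<forall>y\<in>{y. ereal (f y) + g y \<le> ereal (f x0) + g x0}. norm y \<le> Rl"
    using bd unfolding bounded_iff by blast
  define R where "R = Rl + sqrt ((fbe \<gamma> f gf g x0 - phistar) / c0)"
  have "norm x \<le> R" if x: "fbe \<gamma> f gf g x \<le> fbe \<gamma> f gf g x0" for x
  proof -
    define p where "p = prox \<gamma> g (x - \<gamma> *\<^sub>R gf x)"
    have ge: "f p + gr p + c0 * (norm (p - x))\<^sup>2 \<le> fbe \<gamma> f gf g x" unfolding p_def by (rule fbe_ge)
    have le0: "fbe \<gamma> f gf g x0 \<le> f x0 + gr x0" by (rule fbe_le_phi[OF gx0])
    have gp: "g p = ereal (gr p)" unfolding p_def by (rule prox_g_fin)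
    have c0d: "0 \<le> c0 * (norm (p - x))\<^sup>2" using c0_pos by simp
    have "f p + gr p \<le> f x0 + gr x0" using ge x le0 c0d by linarith
    then have "ereal (f p) + g p \<le> ereal (f x0) + g x0" unfolding gp gx0 by simp
    then have np: "norm p \<le> Rl" using Rl by blast
    have "ereal phistar \<le> ereal (f p) + g p" by (rule phistar_le)
    then have "phistar \<le> f p + gr p" unfolding gp by simp
    then have "c0 * (norm (p - x))\<^sup>2 \<le> fbe \<gamma> f gf g x0 - phistar" using ge x by linarith
    then have "(norm (p - x))\<^sup>2 \<le> (fbe \<gamma> f gf g x0 - phistar) / c0" using c0_pos by (simp add: field_simps)
    then have "norm (p - x) \<le> sqrt ((fbe \<gamma> f gf g x0 - phistar) / c0)" by (rule real_le_rsqrt)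
    moreover have "norm x \<le> norm p + norm (p - x)"
      using norm_triangle_ineq4[of p "p - x"] by simp
    ultimately show ?thesis using np unfolding R_def by linarith
  qed
  then show ?thesis by blast
qed

end

lemma deriv_lip_bound:
  fixes F :: "'a::real_normed_vector \<Rightarrow> 'b::real_normed_vector"
  assumes d: "(F has_derivative F') (at y)" and L: "\<forall>a b. norm (F a - F b) \<le> K * norm (a - b)"
  shows "norm (F' h) \<le> K * norm h"
proof (cases "h = 0")
  case True
  have "linear F'" using d by (rule has_derivative_linear)
  then show ?thesis using True by (simp add: linear_0)
next
  case False
  then have nh: "0 < norm h" by simp
  have lin: "linear F'" using d by (rule has_derivative_linear)
  show ?thesis
  proof (rule field_le_epsilon)
    fix e :: real assume e: "0 < e"
    define \<epsilon> where "\<epsilon> = e / norm h"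
    have ep: "0 < \<epsilon>" unfolding \<epsilon>_def using e nh by simp
    have "((\<lambda>y'. norm (F y' - F y - F' (y' - y)) / norm (y' - y)) \<longlongrightarrow> 0) (at y)"
      using d unfolding has_derivative_iff_norm by blast
    then have "eventually (\<lambda>y'. norm (F y' - F y - F' (y' - y)) / norm (y' - y) < \<epsilon>) (at y)"
      using ep by (rule order_tendstoD(2))
    then obtain dd where dd: "dd > 0" "\<forall>y'. y' \<noteq> y \<and> dist y' y < dd \<longrightarrow> norm (F y' - F y - F' (y' - y)) / norm (y' - y) < \<epsilon>"
      unfolding eventually_at by auto
    define t where "t = dd / (2 * norm h)"
    have tp: "0 < t" unfolding t_def using dd nh by simp
    define y' where "y' = y + t *\<^sub>R h"
    have ny: "norm (y' - y) = t * norm h" unfolding y'_def using tp by simp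
    have "t * norm h = dd / 2" unfolding t_def using nh by simp
    then have "y' \<noteq> y" "dist y' y < dd" using ny dd nh tp unfolding dist_norm by auto
    then have "norm (F y' - F y - F' (y' - y)) / norm (y' - y) < \<epsilon>" using dd by blast
    then have A: "norm (F y' - F y - t *\<^sub>R F' h) < \<epsilon> * (t * norm h)"
      using ny tp nh unfolding y'_def by (simp add: linear_cmul[OF lin] field_simps)
    have B: "norm (F y' - F y) \<le> K * (t * norm h)" using L[rule_format, of y' y] ny by simp
    have "norm (t *\<^sub>R F' h) \<le> norm (F y' - F y) + norm (F y' - F y - t *\<^sub>R F' h)"
      using norm_triangle_ineq4[of "F y' - F y" "F y' - F y - t *\<^sub>R F' h"] by simp
    then have "t * norm (F' h) \<le> K * (t * norm h) + \<epsilon> * (t * norm h)" using A B tp by simp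
    then have "t * norm (F' h) \<le> t * (K * norm h + e)" unfolding \<epsilon>_def using nh by (simp add: algebra_simps)
    then show "norm (F' h) \<le> K * norm h + e" using tp by (simp add: mult_le_cancel_left_pos)
  qed
qed

lemma mv_tendsto:
  fixes J :: "nat \<Rightarrow> real ^ 'n::finite ^ 'm::finite"
  assumes "J \<longlonglongrightarrow> M"
  shows "(\<lambda>i. J i *v v) \<longlonglongrightarrow> M *v v"
  unfolding matrix_vector_mult_def
  by (intro tendsto_vec_lambda tendsto_sum tendsto_mult tendsto_const tendsto_vec_nth assms)

lemma clarke_bound:
  fixes F :: "real ^ 'n::finite \<Rightarrow> real ^ 'n"
  assumes L: "\<forall>a b. norm (F a - F b) \<le> K * norm (a - b)" and P: "P \<in> clarke_jac F x"
  shows "norm (P *v v) \<le> K * norm v"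
proof -
  define S where "S = {M :: 'n mat. \<forall>v. norm (M *v v) \<le> K * norm v}"
  have cS: "convex S" unfolding convex_def S_def
  proof (intro ballI allI impI, clarify)
    fix A B :: "'n mat" and u w :: real and v
    assume A: "\<forall>v. norm (A *v v) \<le> K * norm v" and B: "\<forall>v. norm (B *v v) \<le> K * norm v"
      and uw: "0 \<le> u" "0 \<le> w" "u + w = 1"
    have "(u *\<^sub>R A + w *\<^sub>R B) *v v = u *\<^sub>R (A *v v) + w *\<^sub>R (B *v v)"
      by (simp add: matrix_vector_mult_add_rdistrib scaleR_matrix_vector_assoc)
    then have "norm ((u *\<^sub>R A + w *\<^sub>R B) *v v) \<le> u * norm (A *v v) + w * norm (B *v v)"
    proof -
      have "norm (u *\<^sub>R (A *v v) + w *\<^sub>R (B *v v)) \<le> norm (u *\<^sub>R (A *v v)) + norm (w *\<^sub>R (B *v v))"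
        by (rule norm_triangle_ineq)
      also have "\<dots> = u * norm (A *v v) + w * norm (B *v v)" using uw by simp
      finally show ?thesis using \<open>(u *\<^sub>R A + w *\<^sub>R B) *v v = u *\<^sub>R (A *v v) + w *\<^sub>R (B *v v)\<close> by simp
    qed
    also have "\<dots> \<le> u * (K * norm v) + w * (K * norm v)"
      using A B uw by (intro add_mono mult_left_mono) auto
    also have "\<dots> = (u + w) * (K * norm v)" by (simp add: algebra_simps)
    also have "\<dots> = K * norm v" using uw by simp
    finally show "norm ((u *\<^sub>R A + w *\<^sub>R B) *v v) \<le> K * norm v" .
  qed
  have gen: "{M. \<exists>y J. (y \<longlonglongrightarrow> x) \<and> (J \<longlonglongrightarrow> M) \<and> (\<forall>i. (F has_derivative (\<lambda>h. J i *v h)) (at (y i)))} \<subseteq> S"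
  proof (clarify)
    fix M y J
    assume J: "J \<longlonglongrightarrow> M" and D: "\<forall>i. (F has_derivative (\<lambda>h. J i *v h)) (at (y i))"
    show "M \<in> S" unfolding S_def
    proof (clarify)
      fix v
      show "norm (M *v v) \<le> K * norm v"
      proof (rule Lim_norm_ubound[OF _ mv_tendsto[OF J]])
        show "\<not> trivial_limit sequentially" by simp
        show "\<forall>\<^sub>F i in sequentially. norm (J i *v v) \<le> K * norm v"
          using deriv_lip_bound[OF D[rule_format] L] by simp
      qed
    qed
  qed
  have "clarke_jac F x \<subseteq> S" unfolding clarke_jac_def by (rule hull_minimal[where S=convex, OF gen cS])
  then show ?thesis using P unfolding S_def by blast
qed


lemma tr_conv:
  fixes \<phi> :: "real ^ 'n::finite \<Rightarrow> real" and G :: "real ^ 'n \<Rightarrow> real ^ 'n"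
    and x d :: "nat \<Rightarrow> real ^ 'n" and \<delta> :: "nat \<Rightarrow> real" and B :: "nat \<Rightarrow> 'n mat"
    and \<mu>1 \<mu>2 c1 c2 c3 \<beta> lb Rx MB :: real
  assumes deriv: "\<And>y. (\<phi> has_derivative (\<lambda>h. G y \<bullet> h)) (at y)"
    and Gc: "continuous_on UNIV G"
    and lower: "\<And>y. lb \<le> \<phi> y"
    and lev: "\<And>y. \<phi> y \<le> \<phi> (x 0) \<Longrightarrow> norm y \<le> Rx"
    and MBpos: "0 < MB" and MBb: "\<And>k v. norm (x k) \<le> Rx \<Longrightarrow> norm (B k *v v) \<le> MB * norm v"
    and delta0: "0 < \<delta> 0"
    and mu: "0 < \<mu>1" "\<mu>1 < \<mu>2" "\<mu>2 < 1"
    and cs: "0 < c1" "c1 < c2" "c2 < 1" "1 < c3"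
    and beta: "0 < \<beta>"
    and step: "\<And>k. norm (d k) \<le> \<delta> k
          \<and> tr_model (\<phi> (x k)) (G (x k)) (B k) 0 - tr_model (\<phi> (x k)) (G (x k)) (B k) (d k)
              \<ge> \<beta> * norm (G (x k)) * min_ratio (\<delta> k) (norm (G (x k))) (mat_norm (B k))
          \<and> x (Suc k) = (if (\<phi> (x k) - \<phi> (x k + d k)) / (tr_model (\<phi> (x k)) (G (x k)) (B k) 0 - tr_model (\<phi> (x k)) (G (x k)) (B k) (d k)) < \<mu>1
                          then x k else x k + d k)
          \<and> \<delta> (Suc k) = (if (\<phi> (x k) - \<phi> (x k + d k)) / (tr_model (\<phi> (x k)) (G (x k)) (B k) 0 - tr_model (\<phi> (x k)) (G (x k)) (B k) (d k)) < \<mu>1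
                          then c1 * \<delta> k
                          else if (\<phi> (x k) - \<phi> (x k + d k)) / (tr_model (\<phi> (x k)) (G (x k)) (B k) 0 - tr_model (\<phi> (x k)) (G (x k)) (B k) (d k)) < \<mu>2
                          then c2 * \<delta> k else c3 * \<delta> k)"
  shows "(\<lambda>k. norm (G (x k))) \<longlonglongrightarrow> 0"
proof -
  define pred where "pred k = tr_model (\<phi> (x k)) (G (x k)) (B k) 0 - tr_model (\<phi> (x k)) (G (x k)) (B k) (d k)" for k
  define rr where "rr k = (\<phi> (x k) - \<phi> (x k + d k)) / pred k" for k
  define phs where "phs k = \<phi> (x k)" for k
  define Gn where "Gn k = norm (G (x k))" for k
  have sd: "norm (d k) \<le> \<delta> k" for k using conjunct1[OF step[of k]] .
  have sp: "pred k \<ge> \<beta> * Gn k * min_ratio (\<delta> k) (Gn k) (mat_norm (B k))" for k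
    unfolding pred_def Gn_def using conjunct1[OF conjunct2[OF step[of k]]] .
  have sx: "x (Suc k) = (if rr k < \<mu>1 then x k else x k + d k)" for k
    unfolding rr_def pred_def using conjunct1[OF conjunct2[OF conjunct2[OF step[of k]]]] .
  have sdl: "\<delta> (Suc k) = (if rr k < \<mu>1 then c1 * \<delta> k else if rr k < \<mu>2 then c2 * \<delta> k else c3 * \<delta> k)" for k
    unfolding rr_def pred_def using conjunct2[OF conjunct2[OF conjunct2[OF step[of k]]]] .
  have pred_eq: "pred k = - (G (x k) \<bullet> d k) - 1 / 2 * ((B k *v d k) \<bullet> d k)" for k
    unfolding pred_def tr_model_def by simp
  have Gn0: "0 \<le> Gn k" for k unfolding Gn_def by simp
  have dpos: "0 < \<delta> k" for k
  proof (induction k)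
    case 0 then show ?case by (rule delta0)
  next
    case (Suc k) then show ?case using sdl[of k] cs by auto
  qed
  have dsuc: "c1 * \<delta> k \<le> \<delta> (Suc k)" for k
  proof -
    have "c1 * \<delta> k \<le> c2 * \<delta> k" "c1 * \<delta> k \<le> c3 * \<delta> k"
      using cs dpos[of k] by (simp_all add: mult_right_mono)
    then show ?thesis using sdl[of k] by simp
  qed
  have mn0: "0 \<le> mat_norm M" for M :: "'n mat"
    unfolding mat_norm_def by (rule onorm_pos_le[OF matrix_vector_mul_bounded_linear])
  have mr0: "0 \<le> min_ratio (\<delta> k) a (mat_norm (B k))" if "0 \<le> a" for k a
    unfolding min_ratio_def using dpos[of k] mn0[of "B k"] that by auto
  have pred0: "0 \<le> pred k" for k
  proof -
    have "0 \<le> \<beta> * Gn k" using Gn0[of k] beta by simp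
    then have "0 \<le> \<beta> * Gn k * min_ratio (\<delta> k) (Gn k) (mat_norm (B k))"
      using mr0[OF Gn0, of k k] by simp
    then show ?thesis using sp[of k] by linarith
  qed
  have acc: "0 < pred k \<and> \<mu>1 * pred k \<le> phs k - phs (Suc k) \<and> x (Suc k) = x k + d k" if r: "\<not> rr k < \<mu>1" for k
  proof -
    have pk: "0 < pred k"
    proof (rule ccontr)
      assume "\<not> 0 < pred k"
      then have "pred k = 0" using pred0[of k] by simp
      then show False using r mu unfolding rr_def by simp
    qed
    have xs: "x (Suc k) = x k + d k" using sx[of k] r by simp
    have "\<mu>1 \<le> (phs k - phs (Suc k)) / pred k" using r unfolding rr_def phs_def xs by simp
    then have "\<mu>1 * pred k \<le> phs k - phs (Suc k)" using pk by (simp add: le_divide_eq)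
    then show ?thesis using pk xs by simp
  qed
  have mono1: "phs (Suc k) \<le> phs k" for k
  proof (cases "rr k < \<mu>1")
    case True then show ?thesis unfolding phs_def using sx[of k] by simp
  next
    case False
    then have "\<mu>1 * pred k \<le> phs k - phs (Suc k)" using acc by blast
    moreover have "0 \<le> \<mu>1 * pred k" using mu pred0[of k] by simp
    ultimately show ?thesis by simp
  qed
  have le0: "phs k \<le> phs 0" for k
  proof (induction k)
    case (Suc k) then show ?case using mono1[of k] by simp
  qed simp
  have xb: "norm (x k) \<le> Rx" for k using lev le0[of k] unfolding phs_def by blast
  have Bb: "norm (B k *v v) \<le> MB * norm v" for k v using MBb[OF xb] .
  have mnB: "mat_norm (B k) \<le> MB" for k
    unfolding mat_norm_def using Bb[of k] MBpos by (intro onorm_le) auto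
  have quad: "\<bar>(B k *v v) \<bullet> v\<bar> \<le> MB * (norm v)\<^sup>2" for k v
  proof -
    have "\<bar>(B k *v v) \<bullet> v\<bar> \<le> norm (B k *v v) * norm v" by (rule Cauchy_Schwarz_ineq2)
    also have "\<dots> \<le> MB * norm v * norm v" by (intro mult_right_mono Bb) auto
    finally show ?thesis by (simp add: power2_eq_square)
  qed
  have mrge: "min (\<delta> k) (a / MB) \<le> min_ratio (\<delta> k) a (mat_norm (B k))" if a: "0 \<le> a" for k a
  proof (cases "mat_norm (B k) = 0")
    case True then show ?thesis unfolding min_ratio_def by simp
  next
    case False
    then have "0 < mat_norm (B k)" using mn0[of "B k"] by simp
    then have "a / MB \<le> a / mat_norm (B k)" using mnB[of k] a by (intro divide_left_mono) auto
    then show ?thesis unfolding min_ratio_def using False by auto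
  qed
  have predlow: "\<beta> * Gn k * min (\<delta> k) (Gn k / MB) \<le> pred k" for k
  proof -
    have "\<beta> * Gn k * min (\<delta> k) (Gn k / MB) \<le> \<beta> * Gn k * min_ratio (\<delta> k) (Gn k) (mat_norm (B k))"
      using mrge[OF Gn0, of k k] beta Gn0[of k] by (intro mult_left_mono) auto
    then show ?thesis using sp[of k] by linarith
  qed
  have bseq: "Bseq phs"
  proof (rule BseqI')
    fix n
    have "lb \<le> phs n" unfolding phs_def by (rule lower)
    then show "norm (phs n) \<le> \<bar>lb\<bar> + \<bar>phs 0\<bar>" using le0[of n] by auto
  qed
  have "decseq phs" using mono1 by (simp add: decseq_SucI)
  then have "monoseq phs" by (simp add: monoseq_iff)
  then have "convergent phs" using Bseq_monoseq_convergent[OF bseq] by simp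
  then have cau: "Cauchy phs" by (simp add: Cauchy_convergent_iff)
  define K0 where "K0 = cball (0 :: real ^ 'n) (Rx + 1)"
  have uc: "uniformly_continuous_on K0 G"
    unfolding K0_def by (rule compact_uniformly_continuous[OF continuous_on_subset[OF Gc] compact_cball]) simp
  have xK0: "x k \<in> K0" for k unfolding K0_def using xb[of k] by simp
  have clA: "\<exists>\<eta>>0. \<forall>k. \<epsilon> \<le> Gn k \<and> \<delta> k \<le> \<eta> \<longrightarrow> \<mu>2 \<le> rr k" if ep: "0 < \<epsilon>" for \<epsilon>
  proof -
    define \<tau> where "\<tau> = (1 - \<mu>2) * \<beta> * \<epsilon> / 2"
    have tp: "0 < \<tau>" unfolding \<tau>_def using mu beta ep by simp
    have "\<exists>d0>0. \<forall>y\<in>K0. \<forall>y'\<in>K0. dist y' y < d0 \<longrightarrow> dist (G y') (G y) < \<tau>"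
      using uc tp unfolding uniformly_continuous_on_def by blast
    then obtain d0 where d0: "d0 > 0" "\<forall>y\<in>K0. \<forall>y'\<in>K0. dist y' y < d0 \<longrightarrow> dist (G y') (G y) < \<tau>"
      by blast
    define \<eta> where "\<eta> = min 1 (min (d0 / 2) (min ((1 - \<mu>2) * \<beta> * \<epsilon> / MB) (\<epsilon> / MB)))"
    have etap: "0 < \<eta>" unfolding \<eta>_def using d0 mu beta ep MBpos by simp
    have "\<mu>2 \<le> rr k" if k: "\<epsilon> \<le> Gn k" "\<delta> k \<le> \<eta>" for k
    proof -
      define v where "v = d k"
      have nv: "norm v \<le> \<delta> k" unfolding v_def by (rule sd)
      have nve: "norm v \<le> \<eta>" using nv k by simp
      define S where "S = cball (x k) \<eta>"
      have tay: "norm (\<phi> (x k + v) - \<phi> (x k) - G (x k) \<bullet> (x k + v - x k)) \<le> norm (x k + v - x k) * \<tau>"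
      proof (rule differentiable_bound_linearization[where S = S and f' = "\<lambda>y h. G y \<bullet> h"])
        fix t :: real assume "t \<in> {0..1}"
        then have "\<bar>t\<bar> * norm v \<le> 1 * norm v" by (intro mult_right_mono) auto
        then have "norm (t *\<^sub>R v) \<le> \<eta>" using nve by simp
        then show "x k + t *\<^sub>R (x k + v - x k) \<in> S" unfolding S_def by (simp add: dist_norm)
      next
        fix y assume "y \<in> S"
        show "(\<phi> has_derivative (\<lambda>h. G y \<bullet> h)) (at y within S)"
          using deriv by (rule has_derivative_at_withinI)
      next
        fix y assume yS: "y \<in> S"
        have dy: "dist y (x k) \<le> \<eta>" using yS unfolding S_def by (simp add: dist_commute)
        have "norm y \<le> norm (x k) + dist y (x k)"
          using norm_triangle_ineq[of "x k" "y - x k"] by (simp add: dist_norm)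
        moreover have "\<eta> \<le> 1" unfolding \<eta>_def by (rule min.cobounded1)
        ultimately have "norm y \<le> Rx + 1" using xb[of k] dy by linarith
        then have "y \<in> K0" unfolding K0_def by simp
        moreover have "dist y (x k) < d0"
        proof -
          have "\<eta> \<le> d0 / 2" unfolding \<eta>_def by (meson min.cobounded1 min.cobounded2 order_trans)
          then show ?thesis using dy d0 by linarith
        qed
        ultimately have "dist (G y) (G (x k)) < \<tau>" using d0(2) xK0[of k] by blast
        then have gd: "norm (G y - G (x k)) < \<tau>" by (simp add: dist_norm)
        show "onorm ((\<lambda>h. G y \<bullet> h) - (\<lambda>h. G (x k) \<bullet> h)) \<le> \<tau>"
        proof (rule onorm_le)
          fix h
          have "norm (((\<lambda>h. G y \<bullet> h) - (\<lambda>h. G (x k) \<bullet> h)) h) = \<bar>(G y - G (x k)) \<bullet> h\<bar>"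
            by (simp add: inner_diff_left)
          also have "\<dots> \<le> norm (G y - G (x k)) * norm h" by (rule Cauchy_Schwarz_ineq2)
          also have "\<dots> \<le> \<tau> * norm h" using gd by (intro mult_right_mono) auto
          finally show "norm (((\<lambda>h. G y \<bullet> h) - (\<lambda>h. G (x k) \<bullet> h)) h) \<le> \<tau> * norm h" .
        qed
      next
        show "x k \<in> S" unfolding S_def using etap by simp
      qed
      moreover have "norm v * \<tau> \<le> \<delta> k * \<tau>" using nv tp by (intro mult_right_mono) auto
      ultimately have tay2: "\<bar>\<phi> (x k + v) - \<phi> (x k) - G (x k) \<bullet> v\<bar> \<le> \<delta> k * \<tau>"
        by simp
      have et1: "\<eta> \<le> \<epsilon> / MB" unfolding \<eta>_def by (meson min.cobounded1 min.cobounded2 order_trans)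
      have "\<epsilon> / MB \<le> Gn k / MB" using k MBpos by (simp add: divide_right_mono)
      then have "min (\<delta> k) (Gn k / MB) = \<delta> k" using k(2) et1 by simp
      then have "\<beta> * Gn k * \<delta> k \<le> pred k" using predlow[of k] by simp
      moreover have "\<beta> * \<epsilon> * \<delta> k \<le> \<beta> * Gn k * \<delta> k"
        using k beta dpos[of k] by (intro mult_right_mono mult_left_mono) auto
      ultimately have pl: "\<beta> * \<epsilon> * \<delta> k \<le> pred k" by linarith
      have "0 < \<beta> * \<epsilon> * \<delta> k" using beta ep dpos[of k] by simp
      then have pk: "0 < pred k" using pl by linarith
      have q1: "\<bar>(B k *v v) \<bullet> v\<bar> \<le> MB * (\<delta> k * \<eta>)"
      proof -
        have "(norm v)\<^sup>2 \<le> \<delta> k * \<eta>" unfolding power2_eq_square using nv nve dpos[of k] by (intro mult_mono) auto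
        then have "MB * (norm v)\<^sup>2 \<le> MB * (\<delta> k * \<eta>)" using MBpos by (intro mult_left_mono) auto
        then show ?thesis using quad[of k v] by linarith
      qed
      have et2: "MB * \<eta> \<le> (1 - \<mu>2) * \<beta> * \<epsilon>"
      proof -
        have "\<eta> \<le> (1 - \<mu>2) * \<beta> * \<epsilon> / MB" unfolding \<eta>_def by (meson min.cobounded1 min.cobounded2 order_trans)
        then show ?thesis using MBpos by (simp add: field_simps)
      qed
      have q2: "MB * (\<delta> k * \<eta>) \<le> \<delta> k * ((1 - \<mu>2) * \<beta> * \<epsilon>)"
      proof -
        have "\<delta> k * (MB * \<eta>) \<le> \<delta> k * ((1 - \<mu>2) * \<beta> * \<epsilon>)" using et2 dpos[of k] by (intro mult_left_mono) auto
        then show ?thesis by (simp add: ac_simps)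
      qed
      define ared where "ared = \<phi> (x k) - \<phi> (x k + v)"
      have "ared - pred k = - (\<phi> (x k + v) - \<phi> (x k) - G (x k) \<bullet> v) + 1 / 2 * ((B k *v v) \<bullet> v)"
        unfolding ared_def pred_eq v_def by simp
      moreover have "- (\<delta> k * \<tau>) \<le> \<phi> (x k + v) - \<phi> (x k) - G (x k) \<bullet> v"
        "\<phi> (x k + v) - \<phi> (x k) - G (x k) \<bullet> v \<le> \<delta> k * \<tau>"
        using tay2 by (simp_all add: abs_le_iff)
      moreover have "- (MB * (\<delta> k * \<eta>)) \<le> (B k *v v) \<bullet> v" "(B k *v v) \<bullet> v \<le> MB * (\<delta> k * \<eta>)"
        using q1 by (simp_all add: abs_le_iff)
      ultimately have "\<bar>ared - pred k\<bar> \<le> \<delta> k * \<tau> + 1 / 2 * (\<delta> k * ((1 - \<mu>2) * \<beta> * \<epsilon>))"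
        using q2 unfolding abs_le_iff by linarith
      also have "\<dots> = (1 - \<mu>2) * (\<beta> * \<epsilon> * \<delta> k)" unfolding \<tau>_def by (simp add: field_simps)
      also have "\<dots> \<le> (1 - \<mu>2) * pred k" using pl mu by (intro mult_left_mono) auto
      finally have "\<bar>ared - pred k\<bar> \<le> (1 - \<mu>2) * pred k" .
      then have "- ((1 - \<mu>2) * pred k) \<le> ared - pred k" unfolding abs_le_iff by linarith
      moreover have "(1 - \<mu>2) * pred k = pred k - \<mu>2 * pred k" by (simp add: algebra_simps)
      ultimately have "\<mu>2 * pred k \<le> ared" by linarith
      then show ?thesis unfolding rr_def ared_def[symmetric] v_def[symmetric] using pk by (simp add: le_divide_eq)
    qed
    then show ?thesis using etap by blast
  qed
  have clL: "\<exists>k\<ge>K. Gn k < \<epsilon>" if ep: "0 < \<epsilon>" for \<epsilon> K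
  proof (rule ccontr)
    assume "\<not> ?thesis"
    then have big: "\<forall>k\<ge>K. \<epsilon> \<le> Gn k" by (simp add: not_less)
    obtain \<eta> where eta: "\<eta> > 0" "\<forall>k. \<epsilon> \<le> Gn k \<and> \<delta> k \<le> \<eta> \<longrightarrow> \<mu>2 \<le> rr k" using clA[OF ep] by blast
    define dm where "dm = min (\<delta> K) (c1 * \<eta>)"
    have dmp: "0 < dm" unfolding dm_def using dpos[of K] cs eta by simp
    have dlow: "dm \<le> \<delta> (K + j)" for j
    proof (induction j)
      case 0 then show ?case unfolding dm_def by simp
    next
      case (Suc j)
      define k where "k = K + j"
      have IH: "dm \<le> \<delta> k" using Suc unfolding k_def .
      show ?case
      proof (cases "\<delta> k \<le> \<eta>")
        case True
        then have "\<mu>2 \<le> rr k" using eta big k_def by auto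
        then have "\<delta> (Suc k) = c3 * \<delta> k" using sdl[of k] mu by auto
        then have "\<delta> k \<le> \<delta> (Suc k)" using cs dpos[of k] by simp
        then show ?thesis using IH unfolding k_def by simp
      next
        case False
        then have "c1 * \<eta> \<le> c1 * \<delta> k" using cs by simp
        then show ?thesis using dsuc[of k] unfolding k_def dm_def by simp
      qed
    qed
    define D where "D = \<mu>1 * \<beta> * \<epsilon> * min dm (\<epsilon> / MB)"
    have Dp: "0 < D" unfolding D_def using mu beta ep dmp MBpos by simp
    obtain N where N: "\<forall>m\<ge>N. \<forall>n\<ge>N. norm (phs m - phs n) < D" using CauchyD[OF cau Dp] by blast
    define N' where "N' = max N K"
    have rej: "rr k < \<mu>1" if "N' \<le> k" for k
    proof (rule ccontr)
      assume "\<not> rr k < \<mu>1"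
      then have a: "\<mu>1 * pred k \<le> phs k - phs (Suc k)" using acc by blast
      have kK: "K \<le> k" using that unfolding N'_def by simp
      have dk: "dm \<le> \<delta> k" using dlow[of "k - K"] kK by simp
      have "\<epsilon> / MB \<le> Gn k / MB" using big kK MBpos by (simp add: divide_right_mono)
      then have "min dm (\<epsilon> / MB) \<le> min (\<delta> k) (Gn k / MB)"
        using dk by (intro min.mono) auto
      then have "\<beta> * \<epsilon> * min dm (\<epsilon> / MB) \<le> \<beta> * Gn k * min (\<delta> k) (Gn k / MB)"
        using big kK beta ep dmp MBpos by (intro mult_mono mult_left_mono) auto
      then have "\<mu>1 * (\<beta> * \<epsilon> * min dm (\<epsilon> / MB)) \<le> \<mu>1 * pred k"
        using predlow[of k] mu by (intro mult_left_mono) auto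
      then have "D \<le> \<mu>1 * pred k" unfolding D_def by (simp add: mult.assoc)
      then have "D \<le> phs k - phs (Suc k)" using a by simp
      moreover have "norm (phs k - phs (Suc k)) < D" using N that unfolding N'_def by simp
      ultimately show False by simp
    qed
    have geo: "\<delta> (N' + j) = c1 ^ j * \<delta> N'" for j
    proof (induction j)
      case (Suc j) then show ?case using sdl[of "N' + j"] rej[of "N' + j"] by simp
    qed simp
    obtain j where j: "c1 ^ j < dm / \<delta> N'" using real_arch_pow_inv[of "dm / \<delta> N'" c1] dmp dpos[of N'] cs by auto
    then have "c1 ^ j * \<delta> N' < dm" using dpos[of N'] by (simp add: field_simps)
    moreover have "dm \<le> \<delta> (N' + j)" using dlow[of "N' - K + j"] unfolding N'_def by simp
    ultimately show False using geo[of j] by simp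
  qed
  have dec: "\<mu>1 * \<beta> * Gn k * min (norm (x (Suc k) - x k)) (Gn k / MB) \<le> phs k - phs (Suc k)" for k
  proof (cases "rr k < \<mu>1")
    case True
    then have "x (Suc k) = x k" using sx[of k] by simp
    then show ?thesis unfolding phs_def using Gn0[of k] MBpos by simp
  next
    case False
    then have a: "\<mu>1 * pred k \<le> phs k - phs (Suc k)" and xs: "x (Suc k) = x k + d k" using acc by blast+
    have "min (norm (x (Suc k) - x k)) (Gn k / MB) \<le> min (\<delta> k) (Gn k / MB)" using xs sd[of k] by simp
    then have "\<beta> * Gn k * min (norm (x (Suc k) - x k)) (Gn k / MB) \<le> \<beta> * Gn k * min (\<delta> k) (Gn k / MB)"
      using beta Gn0[of k] by (intro mult_left_mono) auto
    then have "\<beta> * Gn k * min (norm (x (Suc k) - x k)) (Gn k / MB) \<le> pred k"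
      using predlow[of k] by linarith
    then have "\<mu>1 * (\<beta> * Gn k * min (norm (x (Suc k) - x k)) (Gn k / MB)) \<le> \<mu>1 * pred k"
      using mu by simp
    then show ?thesis using a by (simp add: mult.assoc)
  qed
  show ?thesis
  proof (rule ccontr)
    assume nc: "\<not> (\<lambda>k. norm (G (x k))) \<longlonglongrightarrow> 0"
    obtain e where e: "e > 0" "\<forall>N. \<exists>m\<ge>N. e \<le> Gn m"
    proof -
      from nc obtain e where "e > 0" "\<not> (\<exists>no. \<forall>n\<ge>no. dist (norm (G (x n))) 0 < e)"
        unfolding lim_sequentially by blast
      then show ?thesis using that unfolding Gn_def by (auto simp: not_less)
    qed
    define \<epsilon> where "\<epsilon> = e / 2"
    have ep: "0 < \<epsilon>" unfolding \<epsilon>_def using e by simp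
    have "\<exists>d1>0. \<forall>y\<in>K0. \<forall>y'\<in>K0. dist y' y < d1 \<longrightarrow> dist (G y') (G y) < \<epsilon>"
      using uc ep unfolding uniformly_continuous_on_def by blast
    then obtain d1 where d1: "d1 > 0" "\<forall>y\<in>K0. \<forall>y'\<in>K0. dist y' y < d1 \<longrightarrow> dist (G y') (G y) < \<epsilon>"
      by blast
    define \<theta> where "\<theta> = \<mu>1 * \<beta> * \<epsilon> * min d1 (\<epsilon> / MB)"
    have thp: "0 < \<theta>" unfolding \<theta>_def using mu beta ep d1 MBpos by simp
    obtain N where N: "\<forall>m\<ge>N. \<forall>n\<ge>N. norm (phs m - phs n) < \<theta>" using CauchyD[OF cau thp] by blast
    obtain m where m: "N \<le> m" "2 * \<epsilon> \<le> Gn m" using e(2) unfolding \<epsilon>_def by auto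
    have exl: "\<exists>k. m \<le> k \<and> Gn k < \<epsilon>" using clL[OF ep, of m] by blast
    define l where "l = (LEAST k. m \<le> k \<and> Gn k < \<epsilon>)"
    have l1: "m \<le> l" "Gn l < \<epsilon>" using LeastI_ex[OF exl] unfolding l_def by auto
    have l2: "\<epsilon> \<le> Gn k" if "m \<le> k" "k < l" for k
      using not_less_Least[of k "\<lambda>k. m \<le> k \<and> Gn k < \<epsilon>"] that unfolding l_def by auto
    define sk where "sk k = norm (x (Suc k) - x k)" for k
    define ak where "ak k = min (sk k) (\<epsilon> / MB)" for k
    have ak0: "0 \<le> ak k" for k unfolding ak_def sk_def using ep MBpos by simp
    have trm: "\<mu>1 * \<beta> * \<epsilon> * ak k \<le> phs k - phs (Suc k)" if "m \<le> k" "k < l" for k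
    proof -
      have g: "\<epsilon> \<le> Gn k" using l2 that .
      have "\<epsilon> / MB \<le> Gn k / MB" using g MBpos by (simp add: divide_right_mono)
      then have "ak k \<le> min (sk k) (Gn k / MB)" unfolding ak_def by (intro min.mono) auto
      then have "\<mu>1 * \<beta> * \<epsilon> * ak k \<le> \<mu>1 * \<beta> * Gn k * min (sk k) (Gn k / MB)"
        using g mu beta ep ak0[of k] by (intro mult_mono mult_left_mono) auto
      then show ?thesis using dec[of k] unfolding sk_def by linarith
    qed
    have tel: "(\<Sum>k = m..<l. phs k - phs (Suc k)) = phs m - phs l"
    proof -
      have "(\<Sum>k = m..<l. phs (Suc k) - phs k) = phs l - phs m" using sum_Suc_diff'[OF l1(1)] .
      moreover have "(\<Sum>k = m..<l. phs k - phs (Suc k)) = - (\<Sum>k = m..<l. phs (Suc k) - phs k)"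
        by (simp add: sum_negf[symmetric])
      ultimately show ?thesis by simp
    qed
    have "\<mu>1 * \<beta> * \<epsilon> * (\<Sum>k = m..<l. ak k) \<le> phs m - phs l"
      unfolding tel[symmetric] sum_distrib_left using trm by (intro sum_mono) auto
    also have "\<dots> < \<theta>"
    proof -
      have "norm (phs m - phs l) < \<theta>" using N m(1) l1(1) by auto
      then show ?thesis by (simp add: abs_less_iff)
    qed
    finally have "(\<Sum>k = m..<l. ak k) < min d1 (\<epsilon> / MB)"
      unfolding \<theta>_def using mu beta ep by (simp add: mult.assoc mult_less_cancel_left_pos)
    then have sa: "(\<Sum>k = m..<l. ak k) < d1" "(\<Sum>k = m..<l. ak k) < \<epsilon> / MB" by auto
    have aks: "ak k = sk k" if "k \<in> {m..<l}" for k
    proof -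
      have "ak k \<le> (\<Sum>k = m..<l. ak k)" using that ak0 by (intro member_le_sum) auto
      then have "ak k < \<epsilon> / MB" using sa by simp
      then show ?thesis unfolding ak_def by auto
    qed
    have "norm (x l - x m) = norm (\<Sum>k = m..<l. x (Suc k) - x k)" using sum_Suc_diff'[OF l1(1), of x] by simp
    also have "\<dots> \<le> (\<Sum>k = m..<l. sk k)" unfolding sk_def by (rule norm_sum)
    also have "\<dots> = (\<Sum>k = m..<l. ak k)" using aks by simp
    finally have "dist (x l) (x m) < d1" using sa by (simp add: dist_norm)
    then have "dist (G (x l)) (G (x m)) < \<epsilon>" using d1 xK0 by blast
    moreover have "Gn m - Gn l \<le> dist (G (x l)) (G (x m))"
      unfolding Gn_def dist_norm using norm_triangle_ineq2[of "G (x m)" "G (x l)"] by (simp add: norm_minus_commute)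
    ultimately have "Gn m < Gn l + \<epsilon>" by linarith
    then show False using l1(2) m(2) by simp
  qed
qed


theorem theorem4p7:
  fixes f :: "real ^ 'n::finite \<Rightarrow> real"
    and gf :: "real ^ 'n \<Rightarrow> real ^ 'n"
    and Hf :: "real ^ 'n \<Rightarrow> 'n mat"
    and g :: "real ^ 'n \<Rightarrow> ereal"
    and Lf \<rho> \<gamma> \<mu>1 \<mu>2 c1 c2 c3 \<beta> :: real
    and x d :: "nat \<Rightarrow> real ^ 'n"
    and \<delta> :: "nat \<Rightarrow> real"
    and P :: "nat \<Rightarrow> 'n mat"
  assumes f_C2: "C2plus f gf Hf"
    and f_lip: "Lf-lipschitz_on UNIV gf"
    and g_proper: "proper_fun g"
    and g_lsc: "lsc_fun g"
    and rho_nonneg: "0 \<le> \<rho>"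
    and g_wc: "weakly_convex \<rho> g"
    and argmin_ne: "\<exists>z. \<forall>y. ereal (f z) + g z \<le> ereal (f y) + g y"
    and level_bdd: "bounded {y. ereal (f y) + g y \<le> ereal (f (x 0)) + g (x 0)}"
    and gamma: "0 < \<gamma>" "\<gamma> * Lf < 1" "\<gamma> * \<rho> < 1"
    and delta0: "0 < \<delta> 0"
    and mu: "0 < \<mu>1" "\<mu>1 < \<mu>2" "\<mu>2 < 1"
    and cs: "0 < c1" "c1 < c2" "c2 < 1" "1 < c3"
    and beta: "0 < \<beta>" "\<beta> < 1"
    and P_sel: "\<forall>k. P k \<in> clarke_jac (prox \<gamma> g) (x k - \<gamma> *\<^sub>R gf (x k))"
    and stopped: "\<forall>k. resid \<gamma> gf g (x k) = 0 \<and> lambda_min (Bmat \<gamma> Hf (P k) (x k)) \<ge> 0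
                     \<longrightarrow> (\<forall>j\<ge>k. x j = x k)"
    and step: "\<forall>k. \<not> (resid \<gamma> gf g (x k) = 0 \<and> lambda_min (Bmat \<gamma> Hf (P k) (x k)) \<ge> 0) \<longrightarrow>
      (let phi = fbe \<gamma> f gf g;
           G = grad (fbe \<gamma> f gf g) (x k);
           B = Bmat \<gamma> Hf (P k) (x k);
           m = tr_model (phi (x k)) G B;
           r = (phi (x k) - phi (x k + d k)) / (m 0 - m (d k))
       in norm (d k) \<le> \<delta> k
          \<and> m 0 - m (d k) \<ge> \<beta> * norm G * min_ratio (\<delta> k) (norm G) (mat_norm B)
          \<and> x (Suc k) = (if r < \<mu>1 then x k else x k + d k)
          \<and> \<delta> (Suc k) = (if r < \<mu>1 then c1 * \<delta> k
                          else if r < \<mu>2 then c2 * \<delta> k else c3 * \<delta> k))"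
  shows "(\<lambda>k. norm (grad (fbe \<gamma> f gf g) (x k))) \<longlonglongrightarrow> 0"
proof -
  interpret S: fbe_setting f gf Hf g Lf \<rho> \<gamma>
    using f_C2 f_lip g_proper g_lsc rho_nonneg g_wc argmin_ne gamma by unfold_locales auto
  show ?thesis
  proof (cases "\<exists>k0. resid \<gamma> gf g (x k0) = 0 \<and> lambda_min (Bmat \<gamma> Hf (P k0) (x k0)) \<ge> 0")
    case True
    then obtain k0 where k0: "resid \<gamma> gf g (x k0) = 0" "lambda_min (Bmat \<gamma> Hf (P k0) (x k0)) \<ge> 0"
      by blast
    have xs: "\<forall>j\<ge>k0. x j = x k0" using mp[OF spec[OF stopped, of k0] conjI[OF k0(1) k0(2)]] .
    have "eventually (\<lambda>j. norm (grad (fbe \<gamma> f gf g) (x j)) = 0) sequentially"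
    proof (rule eventually_sequentiallyI[of k0])
      fix j assume "k0 \<le> j"
      then have "x j = x k0" using xs by blast
      then show "norm (grad (fbe \<gamma> f gf g) (x j)) = 0" using S.grad_fbe S.resid_zero_Gf[OF k0(1)] by simp
    qed
    then show ?thesis by (rule tendsto_eventually)
  next
    case False
    then have ns: "\<not> (resid \<gamma> gf g (x k) = 0 \<and> lambda_min (Bmat \<gamma> Hf (P k) (x k)) \<ge> 0)" for k
      by blast
    obtain Rx where Rx: "\<forall>y. fbe \<gamma> f gf g y \<le> fbe \<gamma> f gf g (x 0) \<longrightarrow> norm y \<le> Rx"
      using S.level_bound[OF level_bdd] by blast
    have "compact (Hf ` cball 0 Rx)"
      by (rule compact_continuous_image[OF continuous_on_subset[OF S.Hf_cont] compact_cball]) simp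
    then have "bounded (Hf ` cball 0 Rx)" by (rule compact_imp_bounded)
    then obtain H where H: "\<forall>A\<in>Hf ` cball 0 Rx. norm A \<le> H" unfolding bounded_iff by blast
    define Hn where "Hn = real CARD('n) * real CARD('n) * max H 0"
    have Hn0: "0 \<le> Hn" unfolding Hn_def by simp
    have Hv: "norm (Hf y *v v) \<le> Hn * norm v" if y: "norm y \<le> Rx" for y v
    proof -
      have nH: "norm (Hf y) \<le> H" using H y by simp
      have "\<bar>Hf y $ i $ j\<bar> \<le> max H 0" for i j
      proof -
        have "\<bar>Hf y $ i $ j\<bar> \<le> norm (Hf y $ i)" by (rule component_le_norm_cart)
        also have "\<dots> \<le> norm (Hf y)" by (rule Finite_Cartesian_Product.norm_nth_le)
        finally show ?thesis using nH by simp
      qed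
      then have "onorm ((*v) (Hf y)) \<le> Hn" unfolding Hn_def by (rule onorm_le_matrix_component)
      moreover have "norm (Hf y *v v) \<le> onorm ((*v) (Hf y)) * norm v"
        by (rule onorm[OF matrix_vector_mul_bounded_linear])
      ultimately show ?thesis by (meson mult_right_mono norm_ge_zero order_trans)
    qed
    define qn where "qn = 1 + \<gamma> * Hn"
    have qn0: "0 \<le> qn" unfolding qn_def using gamma(1) Hn0 by simp
    have Qv: "norm (Qmat \<gamma> Hf y *v v) \<le> qn * norm v" if y: "norm y \<le> Rx" for y v
    proof -
      have "Qmat \<gamma> Hf y *v v = v - \<gamma> *\<^sub>R (Hf y *v v)"
        unfolding Qmat_def by (simp add: matrix_vector_mult_diff_rdistrib scaleR_matrix_vector_assoc)
      then have "norm (Qmat \<gamma> Hf y *v v) \<le> norm v + \<gamma> * norm (Hf y *v v)"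
        using gamma(1) norm_triangle_ineq4[of v "\<gamma> *\<^sub>R (Hf y *v v)"] by simp
      also have "\<dots> \<le> norm v + \<gamma> * (Hn * norm v)"
        using Hv[OF y, of v] gamma(1) by simp
      finally show ?thesis unfolding qn_def by (simp add: algebra_simps)
    qed
    have Pv: "norm (P k *v v) \<le> S.Kp * norm v" for k v
      using clarke_bound[OF _ P_sel[rule_format, of k]] S.prox_lip by blast
    define MB where "MB = (1 / \<gamma>) * qn * (1 + S.Kp * qn) + 1"
    have "0 \<le> (1 / \<gamma>) * qn * (1 + S.Kp * qn)" using gamma(1) qn0 S.Kp_pos
      by (intro mult_nonneg_nonneg add_nonneg_nonneg) auto
    then have MBpos: "0 < MB" unfolding MB_def by linarith
    have Bv: "norm (Bmat \<gamma> Hf (P k) (x k) *v v) \<le> MB * norm v" if xk: "norm (x k) \<le> Rx" for k v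
    proof -
      define Q where "Q = Qmat \<gamma> Hf (x k)"
      define w where "w = v - P k *v (Q *v v)"
      have e: "Bmat \<gamma> Hf (P k) (x k) *v v = (1 / \<gamma>) *\<^sub>R (Q *v w)"
        unfolding Bmat_def Q_def[symmetric] w_def
        by (simp add: scaleR_matrix_vector_assoc[symmetric] matrix_vector_mul_assoc[symmetric]
            matrix_vector_mult_diff_rdistrib)
      have nw: "norm w \<le> (1 + S.Kp * qn) * norm v"
      proof -
        have "norm w \<le> norm v + norm (P k *v (Q *v v))" unfolding w_def by (rule norm_triangle_ineq4)
        also have "\<dots> \<le> norm v + S.Kp * norm (Q *v v)" using Pv by simp
        also have "\<dots> \<le> norm v + S.Kp * (qn * norm v)"
          using Qv[OF xk, of v] S.Kp_pos unfolding Q_def by simp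
        finally show ?thesis by (simp add: algebra_simps)
      qed
      have "norm (Bmat \<gamma> Hf (P k) (x k) *v v) = (1 / \<gamma>) * norm (Q *v w)"
        unfolding e using gamma(1) by simp
      also have "\<dots> \<le> (1 / \<gamma>) * (qn * norm w)"
        using Qv[OF xk, of w] gamma(1) unfolding Q_def by (simp add: divide_right_mono)
      also have "\<dots> \<le> (1 / \<gamma>) * (qn * ((1 + S.Kp * qn) * norm v))"
        using nw qn0 gamma(1) by (simp add: mult_left_mono divide_right_mono)
      also have "\<dots> \<le> MB * norm v" unfolding MB_def by (simp add: algebra_simps)
      finally show ?thesis .
    qed
    have lim: "(\<lambda>k. norm (S.Gf (x k))) \<longlonglongrightarrow> 0"
    proof (rule tr_conv[where \<phi> = "fbe \<gamma> f gf g" and G = S.Gf and B = "\<lambda>k. Bmat \<gamma> Hf (P k) (x k)"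
          and lb = S.phistar and Rx = Rx and MB = MB and d = d and \<delta> = \<delta>])
      show "(fbe \<gamma> f gf g has_derivative (\<lambda>h. S.Gf y \<bullet> h)) (at y)" for y by (rule S.fbe_deriv)
      show "continuous_on UNIV S.Gf" by (rule S.Gf_cont)
      show "S.phistar \<le> fbe \<gamma> f gf g y" for y by (rule S.fbe_lb)
      show "fbe \<gamma> f gf g y \<le> fbe \<gamma> f gf g (x 0) \<Longrightarrow> norm y \<le> Rx" for y using Rx by blast
      show "0 < MB" by (rule MBpos)
      show "norm (x k) \<le> Rx \<Longrightarrow> norm (Bmat \<gamma> Hf (P k) (x k) *v v) \<le> MB * norm v" for k v by (rule Bv)
      show "0 < \<delta> 0" by (rule delta0)
      show "0 < \<mu>1" "\<mu>1 < \<mu>2" "\<mu>2 < 1" by (rule mu)+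
      show "0 < c1" "c1 < c2" "c2 < 1" "1 < c3" by (rule cs)+
      show "0 < \<beta>" by (rule beta)
      fix k
      show "norm (d k) \<le> \<delta> k \<and>
          tr_model (fbe \<gamma> f gf g (x k)) (S.Gf (x k)) (Bmat \<gamma> Hf (P k) (x k)) 0 -
          tr_model (fbe \<gamma> f gf g (x k)) (S.Gf (x k)) (Bmat \<gamma> Hf (P k) (x k)) (d k)
          \<ge> \<beta> * norm (S.Gf (x k)) * min_ratio (\<delta> k) (norm (S.Gf (x k))) (mat_norm (Bmat \<gamma> Hf (P k) (x k))) \<and>
          x (Suc k) = (if (fbe \<gamma> f gf g (x k) - fbe \<gamma> f gf g (x k + d k)) /
              (tr_model (fbe \<gamma> f gf g (x k)) (S.Gf (x k)) (Bmat \<gamma> Hf (P k) (x k)) 0 -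
               tr_model (fbe \<gamma> f gf g (x k)) (S.Gf (x k)) (Bmat \<gamma> Hf (P k) (x k)) (d k)) < \<mu>1
            then x k else x k + d k) \<and>
          \<delta> (Suc k) = (if (fbe \<gamma> f gf g (x k) - fbe \<gamma> f gf g (x k + d k)) /
              (tr_model (fbe \<gamma> f gf g (x k)) (S.Gf (x k)) (Bmat \<gamma> Hf (P k) (x k)) 0 -
               tr_model (fbe \<gamma> f gf g (x k)) (S.Gf (x k)) (Bmat \<gamma> Hf (P k) (x k)) (d k)) < \<mu>1
            then c1 * \<delta> k
            else if (fbe \<gamma> f gf g (x k) - fbe \<gamma> f gf g (x k + d k)) /
              (tr_model (fbe \<gamma> f gf g (x k)) (S.Gf (x k)) (Bmat \<gamma> Hf (P k) (x k)) 0 -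
               tr_model (fbe \<gamma> f gf g (x k)) (S.Gf (x k)) (Bmat \<gamma> Hf (P k) (x k)) (d k)) < \<mu>2
            then c2 * \<delta> k else c3 * \<delta> k)"
        using step[rule_format, OF ns[of k]] unfolding Let_def S.grad_fbe .
    qed
    then show ?thesis using S.grad_fbe by simp
  qed
qed

end
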